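(* Let $p$ be a prime and $v$ the $p$-adic valuation. Let $a_{00},a_{01},a_{02},a_{10},a_{11},a_{20}\in\mathbb{Z}_p$ be fixed with $v(a_{00})\ge 2$, $v(a_{01})\ge 2$, $v(a_{02})=1$, $v(a_{10})\ge 1$, $v(a_{11})\ge 1$, $v(a_{20})=0$. Let $$\mathcal S=\Big\{\sum_{i,j=0}^2a_{ij}X_0^{2-i}X_1^iY_0^{2-j}Y_1^j:\ a_{12}\in p\mathbb{Z}_p,\ a_{21}\in\mathbb{Z}_p,\ a_{22}\in\mathbb{Z}_p\Big\},$$ with $(a_{12},a_{21},a_{22})$ distributed according to the Haar probability measure on $p\mathbb{Z}_p\times\mathbb{Z}_p\times\mathbb{Z}_p$. Then the proportion of polynomials $F\in\mathcal S$ having a zero $(X_0,X_1,Y_0,Y_1)\in\mathbb{Z}_p^4$ with $p\nmid X_1Y_1$ is $1/2$. *)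

theory Defs
  imports "HOL-Probability.Probability"
begin

text \<open>p-adic integers are represented by their base-p digit sequences:
  a = sum_i d_i p^i with 0 <= d_i < p.  The ring structure is the inverse-limit
  one: an element is determined by its truncations modulo p^n.\<close>

definition Zp :: "nat \<Rightarrow> (nat \<Rightarrow> nat) set" where
  "Zp p = {d. \<forall>i. d i < p}"

definition zp_trunc :: "nat \<Rightarrow> (nat \<Rightarrow> nat) \<Rightarrow> nat \<Rightarrow> int" where
  "zp_trunc p d n = (\<Sum>i<n. int (d i) * int p ^ i)"

definition zp_val :: "(nat \<Rightarrow> nat) \<Rightarrow> enat" where
  "zp_val d = (if \<forall>i. d i = 0 then \<infinity> else enat (LEAST i. d i \<noteq> 0))"

text \<open>Multiplication by p (shift of digits); it maps Z_p bijectively onto pZ_p.\<close>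
definition zp_mult_p :: "(nat \<Rightarrow> nat) \<Rightarrow> nat \<Rightarrow> nat" where
  "zp_mult_p d = (\<lambda>i. if i = 0 then 0 else d (i - 1))"

definition zp_haar :: "nat \<Rightarrow> (nat \<Rightarrow> nat) measure" where
  "zp_haar p = PiM UNIV (\<lambda>_. uniform_count_measure {0..<p})"

definition bihom_eval ::
  "nat \<Rightarrow> (nat \<Rightarrow> nat \<Rightarrow> (nat \<Rightarrow> nat)) \<Rightarrow> (nat \<Rightarrow> nat) \<Rightarrow> (nat \<Rightarrow> nat)
     \<Rightarrow> (nat \<Rightarrow> nat) \<Rightarrow> (nat \<Rightarrow> nat) \<Rightarrow> nat \<Rightarrow> int" where
  "bihom_eval p A X0 X1 Y0 Y1 n =
     (\<Sum>i\<le>2. \<Sum>j\<le>2. zp_trunc p (A i j) n * zp_trunc p X0 n ^ (2 - i) * zp_trunc p X1 n ^ i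
                      * zp_trunc p Y0 n ^ (2 - j) * zp_trunc p Y1 n ^ j)"

text \<open>F has a zero (X0,X1,Y0,Y1) in Z_p^4 with p not dividing X1*Y1.
  F(x) = 0 in Z_p iff F(x) = 0 mod p^n for all n.\<close>
definition has_primitive_zero :: "nat \<Rightarrow> (nat \<Rightarrow> nat \<Rightarrow> (nat \<Rightarrow> nat)) \<Rightarrow> bool" where
  "has_primitive_zero p A =
     (\<exists>X0\<in>Zp p. \<exists>X1\<in>Zp p. \<exists>Y0\<in>Zp p. \<exists>Y1\<in>Zp p.
        \<not> (int p dvd zp_trunc p X1 1 * zp_trunc p Y1 1) \<and>
        (\<forall>n. int p ^ n dvd bihom_eval p A X0 X1 Y0 Y1 n))"

definition coef22 ::
  "(nat \<Rightarrow> nat) \<Rightarrow> (nat \<Rightarrow> nat) \<Rightarrow> (nat \<Rightarrow> nat) \<Rightarrow> (nat \<Rightarrow> nat) \<Rightarrow> (nat \<Rightarrow> nat)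
   \<Rightarrow> (nat \<Rightarrow> nat) \<Rightarrow> (nat \<Rightarrow> nat) \<Rightarrow> (nat \<Rightarrow> nat) \<Rightarrow> (nat \<Rightarrow> nat)
   \<Rightarrow> nat \<Rightarrow> nat \<Rightarrow> (nat \<Rightarrow> nat)" where
  "coef22 a00 a01 a02 a10 a11 a12 a20 a21 a22 i j =
     (if i = 0 then (if j = 0 then a00 else if j = 1 then a01 else a02)
      else if i = 1 then (if j = 0 then a10 else if j = 1 then a11 else a12)
      else (if j = 0 then a20 else if j = 1 then a21 else a22))"

end

theory Submission
  imports Defs
begin


type_synonym fam = "nat \<Rightarrow> nat \<Rightarrow> nat \<Rightarrow> int"

definition cs :: "int \<Rightarrow> (nat \<Rightarrow> int) \<Rightarrow> bool" where
  "cs p s \<longleftrightarrow> (\<forall>j k. j \<le> k \<longrightarrow> p^j dvd s k - s j)"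

lemma csI:
  assumes "\<And>n. p^n dvd s (Suc n) - s n"
  shows "cs p s"
  unfolding cs_def
proof (intro allI impI)
  fix j k :: nat assume "j \<le> k"
  then obtain d where k: "k = j + d" by (metis le_add_diff_inverse)
  have "p^j dvd s (j + d) - s j"
  proof (induction d)
    case 0 then show ?case by simp
  next
    case (Suc d)
    have "p^j dvd p^(j+d)" by (simp add: le_imp_power_dvd)
    with assms[of "j+d"] have "p^j dvd s (Suc (j+d)) - s (j+d)" using dvd_trans by blast
    from dvd_add[OF this Suc.IH] show ?case by simp
  qed
  then show "p^j dvd s k - s j" using k by simp
qed

lemma csD: "cs p s \<Longrightarrow> j \<le> k \<Longrightarrow> p^j dvd s k - s j"
  unfolding cs_def by blast

definition ev :: "fam \<Rightarrow> nat \<Rightarrow> int \<Rightarrow> int \<Rightarrow> int" where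
  "ev f n x y = (\<Sum>i\<le>2. \<Sum>j\<le>2. f i j n * x^i * y^j)"

lemma ev_expand: "ev f n x y =
   f 0 0 n + f 0 1 n * y + f 0 2 n * y^2
 + f 1 0 n * x + f 1 1 n * x * y + f 1 2 n * x * y^2
 + f 2 0 n * x^2 + f 2 1 n * x^2 * y + f 2 2 n * x^2 * y^2"
  by (simp add: ev_def numeral_2_eq_2 algebra_simps)

definition stp :: "int \<Rightarrow> fam \<Rightarrow> int \<Rightarrow> fam" where
  "stp p f r i j n = (if i = 0 then (f j 0 (Suc n) + r * f j 1 (Suc n) + r^2 * f j 2 (Suc n)) div p
     else if i = 1 then f j 1 (Suc n) + 2*r*f j 2 (Suc n) else p * f j 2 (Suc n))"

lemma idn:
  assumes "p \<noteq> 0"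
    and d: "\<And>j. j \<le> 2 \<Longrightarrow> p dvd f j 0 (Suc n) + r * f j 1 (Suc n) + r^2 * f j 2 (Suc n)"
  shows "p * ev (stp p f r) n u x = ev f (Suc n) x (r + p*u)"
proof -
  obtain q0 where q0: "f 0 0 (Suc n) + r * f 0 1 (Suc n) + r^2 * f 0 2 (Suc n) = p * q0" using d[of 0] by auto
  obtain q1 where q1: "f 1 0 (Suc n) + r * f 1 1 (Suc n) + r^2 * f 1 2 (Suc n) = p * q1" using d[of 1] by auto
  obtain q2 where q2: "f 2 0 (Suc n) + r * f 2 1 (Suc n) + r^2 * f 2 2 (Suc n) = p * q2" using d[of 2] by auto
  have e0: "f 0 0 (Suc n) = p*q0 - r * f 0 1 (Suc n) - r^2 * f 0 2 (Suc n)" using q0 by simp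
  have e1: "f 1 0 (Suc n) = p*q1 - r * f 1 1 (Suc n) - r^2 * f 1 2 (Suc n)" using q1 by simp
  have e2: "f 2 0 (Suc n) = p*q2 - r * f 2 1 (Suc n) - r^2 * f 2 2 (Suc n)" using q2 by simp
  have s0: "stp p f r 0 0 n = q0" "stp p f r 0 1 n = q1" "stp p f r 0 2 n = q2"
    unfolding stp_def using q0 q1 q2 assms(1) by simp_all
  have s1: "stp p f r 1 j n = f j 1 (Suc n) + 2*r*f j 2 (Suc n)" for j unfolding stp_def by simp
  have s2: "stp p f r 2 j n = p * f j 2 (Suc n)" for j unfolding stp_def by simp
  show ?thesis
    unfolding ev_expand s0 s1 s2 e0 e1 e2
    by (simp add: power2_eq_square algebra_simps)
qed



lemma inv_mod_prime:
  fixes p a :: int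
  assumes "prime p" "\<not> p dvd a"
  obtains ai l where "a * ai = 1 + p * l"
proof -
  have "coprime p a" using assms prime_imp_coprime by blast
  then have g: "gcd a p = 1" by (simp add: coprime_iff_gcd_eq_1 gcd.commute)
  have "fst (bezout_coefficients a p) * a + snd (bezout_coefficients a p) * p = gcd a p"
    by (rule bezout_coefficients_fst_snd)
  then have "a * fst (bezout_coefficients a p) = 1 + p * (- snd (bezout_coefficients a p))"
    using g by (simp add: algebra_simps)
  then show ?thesis using that by blast
qed

lemma dvd_small_eq:
  fixes p y r :: int
  assumes "0 \<le> y" "y < p" "0 \<le> r" "r < p" "p dvd y - r"
  shows "y = r"
proof -
  have "y mod p = r mod p" using assms(5) mod_eq_dvd_iff by blast
  then show ?thesis using assms by simp
qed

definition simp_root :: "int \<Rightarrow> int \<Rightarrow> int \<Rightarrow> int \<Rightarrow> bool" where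
  "simp_root p a t w \<longleftrightarrow> (\<exists>y\<in>{0..<p}. p dvd a*y^2 + t*y + w \<and> \<not> p dvd 2*a*y + t)"

definition dbl :: "int \<Rightarrow> int \<Rightarrow> int \<Rightarrow> int \<Rightarrow> int \<Rightarrow> bool" where
  "dbl p a t w r \<longleftrightarrow> (p dvd a*r^2 + t*r + w \<and> p dvd 2*a*r + t)"

lemma dbl_root_unique:
  fixes p a t w r y :: int
  assumes "prime p" "\<not> p dvd a" "dbl p a t w r" "p dvd a*y^2 + t*y + w"
  shows "p dvd y - r"
proof -
  have id: "a*y^2 + t*y + w = a*(y-r)^2 + (2*a*r+t)*(y-r) + (a*r^2+t*r+w)"
    by (simp add: power2_eq_square algebra_simps)
  have "p dvd (2*a*r+t)*(y-r) + (a*r^2+t*r+w)" using assms(3) unfolding dbl_def by simp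
  then have "p dvd a*(y-r)^2" using assms(4) unfolding id by (metis dvd_add_left_iff add.assoc)
  then have "p dvd (y-r)^2" using assms(1,2) prime_dvd_mult_iff by blast
  then show ?thesis using assms(1) prime_dvd_power by blast
qed

lemma simp_not_dbl:
  fixes p a t w r :: int
  assumes "prime p" "\<not> p dvd a" "simp_root p a t w"
  shows "\<not> dbl p a t w r"
proof
  assume d: "dbl p a t w r"
  obtain y where y: "p dvd a*y^2 + t*y + w" "\<not> p dvd 2*a*y + t" using assms(3) unfolding simp_root_def by blast
  have "p dvd y - r" using dbl_root_unique[OF assms(1,2) d y(1)] .
  then obtain k where k: "y = r + p*k" by (metis add_diff_cancel_left' dvd_def diff_add_cancel add.commute)
  have "2*a*y + t = (2*a*r+t) + p*(2*a*k)" using k by (simp add: algebra_simps)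
  moreover have "p dvd (2*a*r+t) + p*(2*a*k)" using d unfolding dbl_def by (meson dvd_add dvd_triv_left)
  ultimately have "p dvd 2*a*y + t" by (simp add: add_ac)
  then show False using y(2) by simp
qed

lemma dbl_unique:
  fixes p a t w r r' :: int
  assumes "prime p" "\<not> p dvd a" "dbl p a t w r" "dbl p a t w r'" "r \<in> {0..<p}" "r' \<in> {0..<p}"
  shows "r = r'"
  using dbl_root_unique[OF assms(1,2,3)] assms(4,5,6) dvd_small_eq unfolding dbl_def by auto

lemma sum_dvd_one:
  fixes p c :: int
  assumes "p > 0"
  shows "(\<Sum>w\<in>{0..<p}. of_bool (p dvd c + w) :: int) = 1"
proof -
  have "{0..<p} \<inter> {w. p dvd c + w} = {(-c) mod p}"
  proof safe
    fix w assume w: "w \<in> {0..<p}" "p dvd c + w"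
    have "w mod p = (-c) mod p" using w(2) mod_eq_dvd_iff[of w p "-c"] by (simp add: add.commute)
    then show "w = (-c) mod p" using w(1) by simp
  next
    show "(-c) mod p \<in> {0..<p}" using assms by simp
    have "((-c) mod p) mod p = (-c) mod p" by simp
    then show "p dvd c + (-c) mod p" using mod_eq_dvd_iff[of "(-c) mod p" p "-c"] by (simp add: add.commute)
  qed
  then show ?thesis by simp
qed

lemma roots_simple:
  fixes p a t w y1 :: int
  assumes p: "prime p" and a: "\<not> p dvd a" and y1: "y1 \<in> {0..<p}" "p dvd a*y1^2 + t*y1 + w" "\<not> p dvd 2*a*y1 + t"
  shows "card {y\<in>{0..<p}. p dvd a*y^2 + t*y + w} = 2"
proof -
  obtain ai l where ail: "a * ai = 1 + p * l" using inv_mod_prime[OF p a] by blast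
  obtain m where m: "a*y1^2 + t*y1 + w = p*m" using y1(2) by blast
  define y2 where "y2 = (-t*ai - y1) mod p"
  define k where "k = (-t*ai - y1) div p"
  have p0: "p > 0" using p prime_gt_0_int by blast
  have y2: "y2 = -t*ai - y1 - p*k" unfolding y2_def k_def by (simp add: minus_div_mult_eq_mod[symmetric])
  have y2r: "y2 \<in> {0..<p}" unfolding y2_def using p0 by simp
  have s1: "t + a*(y1+y2) = p*(-a*k - t*l)"
  proof -
    have "t + a*(y1+y2) = t - (a*ai)*t - a*p*k" unfolding y2 by (simp add: algebra_simps)
    also have "\<dots> = p*(-a*k - t*l)" unfolding ail by (simp add: algebra_simps)
    finally show ?thesis .
  qed
  have fac: "a*y^2 + t*y + w = a*((y-y1)*(y-y2)) + p*((-a*k - t*l)*y + m - y1*(-a*k - t*l))" for y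
  proof -
    have "w = p*m - a*y1^2 - t*y1" using m by simp
    then have "a*y^2 + t*y + w = a*((y-y1)*(y-y2)) + (t + a*(y1+y2))*y + p*m - y1*(t + a*(y1+y2))"
      by (simp add: power2_eq_square algebra_simps)
    then show ?thesis unfolding s1 by (simp add: algebra_simps)
  qed
  have iff: "p dvd a*y^2 + t*y + w \<longleftrightarrow> p dvd y - y1 \<or> p dvd y - y2" for y
  proof -
    have "p dvd a*y^2 + t*y + w \<longleftrightarrow> p dvd a*((y-y1)*(y-y2))"
      unfolding fac by (metis dvd_add_left_iff dvd_triv_left)
    also have "\<dots> \<longleftrightarrow> p dvd y - y1 \<or> p dvd y - y2" using p a prime_dvd_mult_iff by blast
    finally show ?thesis .
  qed
  have ne: "y1 \<noteq> y2"
  proof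
    assume "y1 = y2"
    then have "2*a*y1 + t = t + a*(y1+y2)" by simp
    then have "p dvd 2*a*y1 + t" unfolding s1 by simp
    then show False using y1(3) by simp
  qed
  have iff2: "p dvd a*y^2 + t*y + w \<longleftrightarrow> y = y1 \<or> y = y2" if "y \<in> {0..<p}" for y
    using iff[of y] that y1(1) y2r dvd_small_eq by (metis atLeastLessThan_iff dvd_0_right diff_self)
  have "{y\<in>{0..<p}. p dvd a*y^2 + t*y + w} = {y1, y2}"
    using iff2 y1(1) y2r by blast
  then show ?thesis using ne by simp
qed

lemma roots_card:
  fixes p a t w :: int
  assumes p: "prime p" and a: "\<not> p dvd a"
  shows "int (card {y\<in>{0..<p}. p dvd a*y^2 + t*y + w}) = 2 * of_bool (simp_root p a t w) + of_bool (\<exists>r\<in>{0..<p}. dbl p a t w r)"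
proof (cases "simp_root p a t w")
  case True
  then obtain y1 where "y1 \<in> {0..<p}" "p dvd a*y1^2 + t*y1 + w" "\<not> p dvd 2*a*y1 + t" unfolding simp_root_def by blast
  from roots_simple[OF p a this] show ?thesis using True simp_not_dbl[OF p a True] by simp
next
  case False
  show ?thesis
  proof (cases "\<exists>r\<in>{0..<p}. dbl p a t w r")
    case True
    then obtain r where r: "r \<in> {0..<p}" "dbl p a t w r" by blast
    have S: "{y\<in>{0..<p}. p dvd a*y^2 + t*y + w} = {r}"
    proof safe
      fix y assume "y \<in> {0..<p}" "p dvd a*y^2 + t*y + w"
      then show "y = r" using dbl_root_unique[OF p a r(2)] r(1) dvd_small_eq by (metis atLeastLessThan_iff)
    next
      show "r \<in> {0..<p}" using r by simp
      show "p dvd a*r^2 + t*r + w" using r unfolding dbl_def by simp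
    qed
    show ?thesis unfolding S using False True by simp
  next
    case nd: False
    have S: "{y\<in>{0..<p}. p dvd a*y^2 + t*y + w} = {}"
    proof safe
      fix y assume y: "y \<in> {0..<p}" "p dvd a*y^2 + t*y + w"
      show "y \<in> {}"
      proof (cases "p dvd 2*a*y + t")
        case True then have "dbl p a t w y" using y unfolding dbl_def by simp
        then show ?thesis using nd y by blast
      next
        case False then have "simp_root p a t w" using y unfolding simp_root_def by blast
        then show ?thesis using \<open>\<not> simp_root p a t w\<close> by blast
      qed
    qed
    show ?thesis unfolding S using False nd by simp
  qed
qed

lemma of_bool_ex_unique:
  assumes "finite R" "\<And>r r'. r \<in> R \<Longrightarrow> r' \<in> R \<Longrightarrow> P r \<Longrightarrow> P r' \<Longrightarrow> r = r'"
  shows "(of_bool (\<exists>r\<in>R. P r) :: int) = (\<Sum>r\<in>R. of_bool (P r))"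
proof (cases "\<exists>r\<in>R. P r")
  case True
  then obtain r0 where r0: "r0 \<in> R" "P r0" by blast
  then have "R \<inter> {r. P r} = {r0}" using assms(2) by blast
  then show ?thesis using True assms(1) by simp
next
  case False
  then have "R \<inter> {r. P r} = {}" by blast
  then show ?thesis using False assms(1) by simp
qed

lemma card_sum:
  assumes "finite R"
  shows "int (card {y\<in>R. P y}) = (\<Sum>y\<in>R. of_bool (P y))"
proof -
  have "{y\<in>R. P y} = R \<inter> {y. P y}" by blast
  then show ?thesis using assms by simp
qed

lemma count_quad:
  fixes p a :: int
  assumes p: "prime p" and a: "\<not> p dvd a"
  shows "(\<Sum>t\<in>{0..<p}. \<Sum>w\<in>{0..<p}. 2 * of_bool (simp_root p a t w) + of_bool (\<exists>r\<in>{0..<p}. dbl p a t w r)) = p^2"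
    and "(\<Sum>t\<in>{0..<p}. \<Sum>w\<in>{0..<p}. of_bool (\<exists>r\<in>{0..<p}. dbl p a t w r) :: int) = p"
    and "\<And>r. (\<Sum>t\<in>{0..<p}. \<Sum>w\<in>{0..<p}. of_bool (dbl p a t w r) :: int) = 1"
proof -
  have p0: "p > 0" using p prime_gt_0_int by blast
  have "(\<Sum>t\<in>{0..<p}. \<Sum>w\<in>{0..<p}. 2 * of_bool (simp_root p a t w) + of_bool (\<exists>r\<in>{0..<p}. dbl p a t w r))
      = (\<Sum>t\<in>{0..<p}. \<Sum>w\<in>{0..<p}. \<Sum>y\<in>{0..<p}. of_bool (p dvd (a*y^2 + t*y) + w) :: int)"
    by (intro sum.cong refl) (simp only: card_sum[symmetric, OF finite_atLeastLessThan_int] roots_card[OF p a])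
  also have "\<dots> = (\<Sum>t\<in>{0..<p}. \<Sum>y\<in>{0..<p}. \<Sum>w\<in>{0..<p}. of_bool (p dvd (a*y^2 + t*y) + w) :: int)"
    by (intro sum.cong refl sum.swap)
  also have "\<dots> = (\<Sum>t\<in>{0..<p}. \<Sum>y\<in>{0..<p}. (1::int))"
    by (intro sum.cong refl sum_dvd_one p0)
  also have "\<dots> = p^2" using p0 by (simp add: power2_eq_square)
  finally show "(\<Sum>t\<in>{0..<p}. \<Sum>w\<in>{0..<p}. 2 * of_bool (simp_root p a t w) + of_bool (\<exists>r\<in>{0..<p}. dbl p a t w r)) = p^2" .
  show one: "(\<Sum>t\<in>{0..<p}. \<Sum>w\<in>{0..<p}. of_bool (dbl p a t w r) :: int) = 1" for r
  proof -
    have "(\<Sum>t\<in>{0..<p}. \<Sum>w\<in>{0..<p}. of_bool (dbl p a t w r) :: int)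
       = (\<Sum>t\<in>{0..<p}. of_bool (p dvd 2*a*r + t) * (\<Sum>w\<in>{0..<p}. of_bool (p dvd (a*r^2 + t*r) + w)))"
      unfolding dbl_def sum_distrib_left by (intro sum.cong refl) auto
    also have "\<dots> = (\<Sum>t\<in>{0..<p}. of_bool (p dvd 2*a*r + t))"
      using sum_dvd_one[OF p0] by simp
    also have "\<dots> = 1" using sum_dvd_one[OF p0] by simp
    finally show ?thesis .
  qed
  have "(\<Sum>t\<in>{0..<p}. \<Sum>w\<in>{0..<p}. of_bool (\<exists>r\<in>{0..<p}. dbl p a t w r) :: int)
      = (\<Sum>t\<in>{0..<p}. \<Sum>w\<in>{0..<p}. \<Sum>r\<in>{0..<p}. of_bool (dbl p a t w r))"
    by (intro sum.cong refl of_bool_ex_unique) (auto intro: dbl_unique[OF p a])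
  also have "\<dots> = (\<Sum>r\<in>{0..<p}. \<Sum>t\<in>{0..<p}. \<Sum>w\<in>{0..<p}. of_bool (dbl p a t w r))"
    by (subst sum.swap) (intro sum.cong refl sum.swap)
  also have "\<dots> = p" using one p0 by simp
  finally show "(\<Sum>t\<in>{0..<p}. \<Sum>w\<in>{0..<p}. of_bool (\<exists>r\<in>{0..<p}. dbl p a t w r) :: int) = p" .
qed



lemma div_lt_of_lt_mult:
  fixes z A B :: int
  assumes "A > 0" "z < A*B"
  shows "z div A < B"
proof (rule ccontr)
  assume "\<not> z div A < B"
  then have "A*B \<le> A*(z div A)" using assms(1) by simp
  moreover have "A*(z div A) \<le> z"
  proof -
    have "A*(z div A) + z mod A = z" by simp
    moreover have "z mod A \<ge> 0" using assms(1) by simp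
    ultimately show ?thesis by linarith
  qed
  ultimately show False using assms(2) by simp
qed

lemma sum_split:
  fixes A B :: int
  assumes A: "A > 0" and B: "B > 0"
  shows "(\<Sum>x\<in>{0..<A*B}. g x) = (\<Sum>x0\<in>{0..<A}. \<Sum>x1\<in>{0..<B}. g (x0 + A*x1))"
proof -
  have bij: "bij_betw (\<lambda>(x0,x1). x0 + A*x1) ({0..<A} \<times> {0..<B}) {0..<A*B}"
    apply (rule bij_betw_byWitness[where f' = "\<lambda>z. (z mod A, z div A)"])
    subgoal using A by auto
    subgoal by simp
    subgoal
    proof safe
      fix x0 x1 assume h: "x0 \<in> {0..<A}" "x1 \<in> {0..<B}"
      have "A*x1 \<le> A*(B-1)" using h A by (intro mult_left_mono) auto
      then show "x0 + A*x1 \<in> {0..<A*B}" using h A by (auto simp: algebra_simps)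
    qed
    subgoal using A div_lt_of_lt_mult by (auto simp: pos_imp_zdiv_nonneg_iff)
    done
  have "(\<Sum>x\<in>{0..<A*B}. g x) = (\<Sum>z\<in>{0..<A} \<times> {0..<B}. g ((\<lambda>(x0,x1). x0 + A*x1) z))"
    using sum.reindex_bij_betw[OF bij, of g] by simp
  also have "\<dots> = (\<Sum>x0\<in>{0..<A}. \<Sum>x1\<in>{0..<B}. g (x0 + A*x1))"
    by (simp add: sum.cartesian_product split_def)
  finally show ?thesis .
qed

lemma sum_trans:
  fixes M c :: int
  assumes M: "M > 0"
  shows "(\<Sum>x\<in>{0..<M}. g ((c + x) mod M)) = (\<Sum>x\<in>{0..<M}. g x)"
proof -
  have bij: "bij_betw (\<lambda>x. (c + x) mod M) {0..<M} {0..<M}"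
    apply (rule bij_betw_byWitness[where f' = "\<lambda>z. (z - c) mod M"])
    subgoal by (simp add: mod_diff_left_eq)
    subgoal by (simp add: mod_add_right_eq)
    subgoal using M by auto
    subgoal using M by auto
    done
  show ?thesis using sum.reindex_bij_betw[OF bij, of g] by simp
qed

lemma pow_pos: "(p::int) > 0 \<Longrightarrow> p^m > 0" by simp

lemma sum_split_p:
  fixes p :: int assumes "p > 0"
  shows "(\<Sum>x\<in>{0..<p^Suc m}. g x) = (\<Sum>x0\<in>{0..<p}. \<Sum>x1\<in>{0..<p^m}. g (x0 + p*x1))"
  using sum_split[OF assms pow_pos[OF assms, of m], of g] by simp

lemma sum_split_q:
  fixes p :: int assumes "p > 0"
  shows "(\<Sum>x\<in>{0..<p^Suc m}. g x) = (\<Sum>x0\<in>{0..<p^m}. \<Sum>j\<in>{0..<p}. g (x0 + p^m*j))"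
  using sum_split[OF pow_pos[OF assms, of m] assms, of g] by (simp add: mult.commute)



fun V :: "int \<Rightarrow> nat \<Rightarrow> fam \<Rightarrow> int \<Rightarrow> int \<Rightarrow> int \<Rightarrow> bool" where
  "V p 0 f s t w = True"
| "V p (Suc m) f s t w = (simp_root p (f 0 2 1) t w \<or> (\<exists>r\<in>{0..<p}. dbl p (f 0 2 1) t w r \<and>
      V p m (stp p f r) (((t + 2*r*f 0 2 (Suc m)) div p) mod p^m)
        ((s + (r*f 1 1 (Suc m) + r^2*f 1 2 (Suc m)) div p) mod p^m)
        (((w + (r*t + r^2*f 0 2 (Suc m))) div p) mod p^m)))"

lemma simp_root_mod:
  assumes "p dvd t - t'" "p dvd w - w'"
  shows "simp_root p a t w = simp_root p a t' w'"
proof -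
  have e1: "p dvd a*y^2 + t*y + w \<longleftrightarrow> p dvd a*y^2 + t'*y + w'" for y
  proof -
    have "a*y^2 + t*y + w = (a*y^2 + t'*y + w') + ((t - t')*y + (w - w'))" by (simp add: algebra_simps)
    moreover have "p dvd (t - t')*y + (w - w')" using assms by simp
    ultimately show ?thesis by (metis dvd_add_left_iff)
  qed
  have e2: "p dvd 2*a*y + t \<longleftrightarrow> p dvd 2*a*y + t'" for y
  proof -
    have "2*a*y + t = (2*a*y + t') + (t - t')" by simp
    then show ?thesis using assms(1) by (metis dvd_add_left_iff)
  qed
  show ?thesis unfolding simp_root_def using e1 e2 by simp
qed

lemma dbl_mod:
  assumes "p dvd t - t'" "p dvd w - w'"
  shows "dbl p a t w r = dbl p a t' w' r"
proof -
  have "a*r^2 + t*r + w = (a*r^2 + t'*r + w') + ((t - t')*r + (w - w'))" by (simp add: algebra_simps)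
  moreover have "p dvd (t - t')*r + (w - w')" using assms by simp
  moreover have "2*a*r + t = (2*a*r + t') + (t - t')" by simp
  ultimately show ?thesis unfolding dbl_def using assms(1) by (metis dvd_add_left_iff)
qed

lemma dvd_mod_diff: "(p::int) dvd M \<Longrightarrow> p dvd t - t mod M"
  by (metis dvd_mult2 minus_mod_eq_mult_div)

lemma div_mod_cong:
  fixes p x x' :: int
  assumes "p > 0" "p^(Suc k) dvd x - x'"
  shows "(x div p) mod p^k = (x' div p) mod p^k"
proof -
  obtain q where q: "x - x' = p^(Suc k) * q" using assms(2) by blast
  then have "x = x' + p * (p^k * q)" by (simp add: algebra_simps)
  then have "x div p = p^k * q + x' div p" using assms(1) by simp
  then show ?thesis by simp
qed

lemma V_mod:
  assumes "p > 0"
  shows "V p m f s t w = V p m f (s mod p^m) (t mod p^m) (w mod p^m)"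
proof (cases m)
  case 0 then show ?thesis by simp
next
  case (Suc k)
  have dt: "p dvd t - t mod p^m" "p dvd w - w mod p^m"
    using Suc by (simp_all add: dvd_mod_diff)
  have h1: "((t + c) div p) mod p^k = ((t mod p^m + c) div p) mod p^k" for c
    using Suc assms by (intro div_mod_cong) (simp_all add: minus_mod_eq_mult_div[symmetric])
  have h2: "(s + c) mod p^k = (s mod p^m + c) mod p^k" for c
  proof -
    have "p^k dvd p^m" using Suc by (simp add: le_imp_power_dvd)
    then have "p^k dvd s - s mod p^m" by (metis dvd_mult2 minus_mod_eq_mult_div)
    then show ?thesis by (simp add: mod_eq_dvd_iff)
  qed
  have h3: "((w + (r*t + c)) div p) mod p^k = ((w mod p^m + (r*(t mod p^m) + c)) div p) mod p^k" for r c
  proof (intro div_mod_cong assms)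
    have eq: "w + (r*t + c) - (w mod p^m + (r*(t mod p^m) + c)) = (w - w mod p^m) + r*(t - t mod p^m)"
      by (simp add: algebra_simps)
    have dv: "p^(Suc k) dvd (w - w mod p^m) + r*(t - t mod p^m)"
      using Suc by (simp add: minus_mod_eq_mult_div[symmetric])
    show "p^(Suc k) dvd w + (r*t + c) - (w mod p^m + (r*(t mod p^m) + c))" unfolding eq using dv .
  qed
  show ?thesis unfolding Suc V.simps
    using simp_root_mod[OF dt[unfolded Suc]] dbl_mod[OF dt[unfolded Suc]] h1[unfolded Suc] h2[unfolded Suc] h3[unfolded Suc]
    by simp
qed



lemma cs_shift: "cs p s \<Longrightarrow> cs p (\<lambda>n. s (Suc n))"
  unfolding cs_def
proof (intro allI impI)
  fix j k :: nat assume h: "\<forall>j k. j \<le> k \<longrightarrow> p ^ j dvd s k - s j" "j \<le> k"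
  then have "p^(Suc j) dvd s (Suc k) - s (Suc j)" using h(1)[rule_format, of "Suc j" "Suc k"] by simp
  moreover have "p^j dvd p^(Suc j)" by (simp add: le_imp_power_dvd)
  ultimately show "p ^ j dvd s (Suc k) - s (Suc j)" using dvd_trans by blast
qed

lemma cs_add: "cs p a \<Longrightarrow> cs p b \<Longrightarrow> cs p (\<lambda>n. a n + b n)"
  unfolding cs_def
proof (intro allI impI)
  fix j k :: nat assume "\<forall>j k. j \<le> k \<longrightarrow> p ^ j dvd a k - a j" "\<forall>j k. j \<le> k \<longrightarrow> p ^ j dvd b k - b j" "j \<le> k"
  then have "p^j dvd (a k - a j) + (b k - b j)" by simp
  then show "p ^ j dvd a k + b k - (a j + b j)" by (simp add: algebra_simps)
qed

lemma cs_cmul: "cs p a \<Longrightarrow> cs p (\<lambda>n. c * a n)"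
  unfolding cs_def
proof (intro allI impI)
  fix j k :: nat assume "\<forall>j k. j \<le> k \<longrightarrow> p ^ j dvd a k - a j" "j \<le> k"
  then have "p^j dvd c * (a k - a j)" by simp
  then show "p ^ j dvd c * a k - c * a j" by (simp add: algebra_simps)
qed

lemma cs_mul: "cs p a \<Longrightarrow> cs p b \<Longrightarrow> cs p (\<lambda>n. a n * b n)"
  unfolding cs_def
proof (intro allI impI)
  fix j k :: nat assume "\<forall>j k. j \<le> k \<longrightarrow> p ^ j dvd a k - a j" "\<forall>j k. j \<le> k \<longrightarrow> p ^ j dvd b k - b j" "j \<le> k"
  then have "p^j dvd a k * (b k - b j) + b j * (a k - a j)" by simp
  then show "p ^ j dvd a k * b k - a j * b j" by (simp add: algebra_simps)
qed

lemma cs_const: "cs p (\<lambda>n. c)"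
  unfolding cs_def by simp

lemma cs_div:
  assumes "p \<noteq> 0" "cs p N" "\<And>n. p dvd N (Suc n)"
  shows "cs p (\<lambda>n. N (Suc n) div p)"
  unfolding cs_def
proof (intro allI impI)
  fix j k :: nat assume jk: "j \<le> k"
  obtain a where a: "N (Suc k) = p * a" using assms(3) by blast
  obtain b where b: "N (Suc j) = p * b" using assms(3) by blast
  have "p^(Suc j) dvd N (Suc k) - N (Suc j)" using csD[OF assms(2), of "Suc j" "Suc k"] jk by simp
  then have "p * p^j dvd p * (a - b)" unfolding a b by (simp add: algebra_simps)
  then have "p^j dvd a - b" using assms(1) by simp
  then show "p ^ j dvd N (Suc k) div p - N (Suc j) div p" unfolding a b using assms(1) by simp
qed

lemma cs_p1:
  assumes "cs p s" "p dvd s k" "1 \<le> k" "1 \<le> n"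
  shows "p dvd s n"
proof -
  have "p dvd s k - s 1" using csD[OF assms(1), of 1 k] assms(3) by simp
  moreover have "p dvd s n - s 1" using csD[OF assms(1), of 1 n] assms(4) by simp
  ultimately show ?thesis using assms(2) by (metis dvd_diff diff_diff_cancel dvd_add_right_iff diff_add_cancel)
qed

lemma cs_lvl:
  assumes "cs p s" "p^k dvd s k" "k \<le> n"
  shows "p^k dvd s n"
proof -
  have "p^k dvd s n - s k" using csD[OF assms(1) assms(3)] .
  then show ?thesis using assms(2) by (metis dvd_add diff_add_cancel)
qed

definition Adm :: "int \<Rightarrow> fam \<Rightarrow> bool" where
  "Adm p f \<longleftrightarrow> cs p (f 2 2) \<and> cs p (f 2 1) \<and> cs p (f 2 0) \<and> cs p (f 1 2) \<and> cs p (f 1 1) \<and> cs p (f 0 2)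
     \<and> p^2 dvd f 2 2 2 \<and> p^2 dvd f 2 1 2 \<and> p dvd f 2 0 1 \<and> \<not> p^2 dvd f 2 0 2
     \<and> p dvd f 1 2 1 \<and> p dvd f 1 1 1 \<and> \<not> p dvd f 0 2 1"

lemma stp_0: "stp p f r 0 j = (\<lambda>n. (f j 0 (Suc n) + r * f j 1 (Suc n) + r^2 * f j 2 (Suc n)) div p)"
  by (rule ext) (simp add: stp_def)
lemma stp_1: "stp p f r 1 j = (\<lambda>n. f j 1 (Suc n) + 2*r*f j 2 (Suc n))"
  by (rule ext) (simp add: stp_def)
lemma stp_2: "stp p f r 2 j = (\<lambda>n. p * f j 2 (Suc n))"
  by (rule ext) (simp add: stp_def)

lemma Adm_step:
  assumes p: "p > 1" and A: "Adm p f"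
  shows "Adm p (stp p f r)"
proof -
  have p0: "p \<noteq> 0" using p by simp
  note A' = A[unfolded Adm_def]
  have c22: "cs p (f 2 2)" and c21: "cs p (f 2 1)" and c20: "cs p (f 2 0)" and c12: "cs p (f 1 2)"
    and c11: "cs p (f 1 1)" and c02: "cs p (f 0 2)" using A' by auto
  have d222: "p dvd f 2 2 2" using A' by (metis dvd_mult_left power2_eq_square)
  have d212: "p dvd f 2 1 2" using A' by (metis dvd_mult_left power2_eq_square)
  have d22: "p dvd f 2 2 n" if "1 \<le> n" for n using cs_p1[OF c22 d222] that by simp
  have d21: "p dvd f 2 1 n" if "1 \<le> n" for n using cs_p1[OF c21 d212] that by simp
  have d20: "p dvd f 2 0 n" if "1 \<le> n" for n using cs_p1[OF c20, of 1] A' that by simp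
  have d12: "p dvd f 1 2 n" if "1 \<le> n" for n using cs_p1[OF c12, of 1] A' that by simp
  have d11: "p dvd f 1 1 n" if "1 \<le> n" for n using cs_p1[OF c11, of 1] A' that by simp
  have n02: "\<not> p dvd f 0 2 n" if "1 \<le> n" for n using cs_p1[OF c02, of n 1] A' that by auto
  have cs02: "cs p (\<lambda>n. (f 2 0 (Suc n) + r * f 2 1 (Suc n) + r^2 * f 2 2 (Suc n)) div p)"
  proof (rule cs_div[OF p0, where N = "\<lambda>n. f 2 0 n + r * f 2 1 n + r^2 * f 2 2 n"])
    show "cs p (\<lambda>n. f 2 0 n + r * f 2 1 n + r^2 * f 2 2 n)"
      by (intro cs_add cs_cmul c20 c21 c22)
    show "p dvd f 2 0 (Suc n) + r * f 2 1 (Suc n) + r^2 * f 2 2 (Suc n)" for n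
      using d20[of "Suc n"] d21[of "Suc n"] d22[of "Suc n"] by simp
  qed
  have u: "\<not> p dvd (f 2 0 2 + r * f 2 1 2 + r^2 * f 2 2 2) div p"
  proof
    assume h: "p dvd (f 2 0 2 + r * f 2 1 2 + r^2 * f 2 2 2) div p"
    obtain uu where uu: "f 2 1 2 = p^2 * uu" using A' by blast
    obtain vv where vv: "f 2 2 2 = p^2 * vv" using A' by blast
    obtain cc where cc: "f 2 0 2 = p * cc" using d20[of 2] by auto
    have "f 2 0 2 + r * f 2 1 2 + r^2 * f 2 2 2 = p * (cc + p * (r*uu + r^2 * vv))"
      unfolding uu vv cc by (simp add: power2_eq_square algebra_simps)
    then have "(f 2 0 2 + r * f 2 1 2 + r^2 * f 2 2 2) div p = cc + p * (r*uu + r^2 * vv)" using p0 by simp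
    with h have "p dvd cc" by (metis dvd_add_left_iff dvd_triv_left)
    then have "p^2 dvd f 2 0 2" unfolding cc by (simp add: power2_eq_square)
    then show False using A' by blast
  qed
  show ?thesis unfolding Adm_def stp_0 stp_1 stp_2
  proof (intro conjI)
    show "cs p (\<lambda>n. p * f 2 2 (Suc n))" by (intro cs_cmul cs_shift c22)
    show "cs p (\<lambda>n. p * f 1 2 (Suc n))" by (intro cs_cmul cs_shift c12)
    show "cs p (\<lambda>n. p * f 0 2 (Suc n))" by (intro cs_cmul cs_shift c02)
    show "cs p (\<lambda>n. f 2 1 (Suc n) + 2 * r * f 2 2 (Suc n))" by (intro cs_add cs_cmul cs_shift c21 c22)
    show "cs p (\<lambda>n. f 1 1 (Suc n) + 2 * r * f 1 2 (Suc n))" by (intro cs_add cs_cmul cs_shift c11 c12)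
    show "cs p (\<lambda>n. (f 2 0 (Suc n) + r * f 2 1 (Suc n) + r\<^sup>2 * f 2 2 (Suc n)) div p)" by (rule cs02)
    show "p\<^sup>2 dvd p * f 2 2 (Suc 2)" using d22[of 3] by (simp add: power2_eq_square)
    show "p\<^sup>2 dvd p * f 1 2 (Suc 2)" using d12[of 3] by (simp add: power2_eq_square)
    show "p dvd p * f 0 2 (Suc 1)" by simp
    show "\<not> p\<^sup>2 dvd p * f 0 2 (Suc 2)" using n02[of 3] p0 by (simp add: power2_eq_square)
    show "p dvd f 2 1 (Suc 1) + 2 * r * f 2 2 (Suc 1)" using d21[of "Suc 1"] d22[of "Suc 1"] by simp
    show "p dvd f 1 1 (Suc 1) + 2 * r * f 1 2 (Suc 1)" using d11[of "Suc 1"] d12[of "Suc 1"] by simp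
    show "\<not> p dvd (f 2 0 (Suc 1) + r * f 2 1 (Suc 1) + r\<^sup>2 * f 2 2 (Suc 1)) div p" using u by (simp add: numeral_2_eq_2)
  qed
qed



lemma sum_LS:
  fixes p K :: int assumes p: "p > 0"
  shows "(\<Sum>s\<in>{0..<p^Suc m}. h ((s + K) mod p^m)) = p * (\<Sum>s\<in>{0..<p^m}. h s)"
proof -
  have Q: "p^m > 0" using p by simp
  have "(\<Sum>s\<in>{0..<p^Suc m}. h ((s + K) mod p^m)) = (\<Sum>x0\<in>{0..<p^m}. \<Sum>j\<in>{0..<p}. h ((x0 + p^m*j + K) mod p^m))"
    by (rule sum_split_q[OF p])
  also have "\<dots> = (\<Sum>x0\<in>{0..<p^m}. \<Sum>j\<in>{0..<p}. h ((K + x0) mod p^m))"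
  proof (intro sum.cong refl)
    fix x0 j
    have "(x0 + p^m*j + K) mod p^m = (K + x0) mod p^m" by (simp add: mod_eq_dvd_iff)
    then show "h ((x0 + p^m*j + K) mod p^m) = h ((K + x0) mod p^m)" by simp
  qed
  also have "\<dots> = (\<Sum>x0\<in>{0..<p^m}. p * h ((K + x0) mod p^m))" using p by simp
  also have "\<dots> = p * (\<Sum>x0\<in>{0..<p^m}. h ((K + x0) mod p^m))" by (simp add: sum_distrib_left)
  also have "\<dots> = p * (\<Sum>s\<in>{0..<p^m}. h s)" using sum_trans[OF Q, of h K] by simp
  finally show ?thesis .
qed

lemma sum_LT:
  fixes p c :: int and F h :: "int \<Rightarrow> int" assumes p: "p > 0" and F: "\<And>t. F t = F (t mod p)"
  shows "(\<Sum>t\<in>{0..<p^Suc m}. F t * h (((t + c) div p) mod p^m)) = (\<Sum>t0\<in>{0..<p}. F t0) * (\<Sum>x\<in>{0..<p^m}. h x)"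
proof -
  have Q: "p^m > 0" using p by simp
  have "(\<Sum>t\<in>{0..<p^Suc m}. F t * h (((t + c) div p) mod p^m)) =
      (\<Sum>t0\<in>{0..<p}. \<Sum>t1\<in>{0..<p^m}. F (t0 + p*t1) * h (((t0 + p*t1 + c) div p) mod p^m))"
    by (rule sum_split_p[OF p])
  also have "\<dots> = (\<Sum>t0\<in>{0..<p}. \<Sum>t1\<in>{0..<p^m}. F t0 * h ((((t0 + c) div p) + t1) mod p^m))"
  proof (intro sum.cong refl)
    fix t0 t1 assume t0: "t0 \<in> {0..<p}"
    have "F (t0 + p*t1) = F ((t0 + p*t1) mod p)" by (rule F)
    also have "\<dots> = F t0" using t0 by simp
    finally have e1: "F (t0 + p*t1) = F t0" .
    have "t0 + p*t1 + c = (t0 + c) + p*t1" by simp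
    then have "(t0 + p*t1 + c) div p = ((t0 + c) + p*t1) div p" by (rule arg_cong)
    also have "\<dots> = t1 + (t0 + c) div p" using div_mult_self2[of p "t0 + c" t1] p by simp
    finally have e2: "(t0 + p*t1 + c) div p = ((t0 + c) div p) + t1" by simp
    show "F (t0 + p*t1) * h (((t0 + p*t1 + c) div p) mod p^m) = F t0 * h ((((t0 + c) div p) + t1) mod p^m)"
      unfolding e1 e2 ..
  qed
  also have "\<dots> = (\<Sum>t0\<in>{0..<p}. F t0 * (\<Sum>x\<in>{0..<p^m}. h x))"
  proof (intro sum.cong refl)
    fix t0
    show "(\<Sum>t1\<in>{0..<p^m}. F t0 * h ((((t0 + c) div p) + t1) mod p^m)) = F t0 * (\<Sum>x\<in>{0..<p^m}. h x)"
    proof -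
      have "(\<Sum>t1\<in>{0..<p^m}. F t0 * h ((((t0 + c) div p) + t1) mod p^m)) = F t0 * (\<Sum>t1\<in>{0..<p^m}. h ((((t0 + c) div p) + t1) mod p^m))"
        by (rule sum_distrib_left[symmetric])
      also have "\<dots> = F t0 * (\<Sum>x\<in>{0..<p^m}. h x)" using sum_trans[OF Q, of h "(t0 + c) div p"] by simp
      finally show ?thesis .
    qed
  qed
  also have "\<dots> = (\<Sum>t0\<in>{0..<p}. F t0) * (\<Sum>x\<in>{0..<p^m}. h x)"
    by (simp add: sum_distrib_right)
  finally show ?thesis .
qed

lemma simp_root_modp: "simp_root p a t w = simp_root p a (t mod p) (w mod p)"
  by (rule simp_root_mod) (simp_all add: dvd_mod_diff)

lemma dbl_modp: "dbl p a t w r = dbl p a (t mod p) (w mod p) r"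
  by (rule dbl_mod) (simp_all add: dvd_mod_diff)

lemma simp_root_w: "simp_root p a t (w mod p) = simp_root p a t w"
  using simp_root_mod[of p t t "w mod p" w a] dvd_mod_diff[of p p w] by (simp add: dvd_diff_commute)
lemma simp_root_t: "simp_root p a (t mod p) w = simp_root p a t w"
  using simp_root_mod[of p "t mod p" t w w a] dvd_mod_diff[of p p t] by (simp add: dvd_diff_commute)
lemma dbl_w: "dbl p a t (w mod p) r = dbl p a t w r"
  using dbl_mod[of p t t "w mod p" w a r] dvd_mod_diff[of p p w] by (simp add: dvd_diff_commute)
lemma dbl_t: "dbl p a (t mod p) w r = dbl p a t w r"
  using dbl_mod[of p "t mod p" t w w a r] dvd_mod_diff[of p p t] by (simp add: dvd_diff_commute)

definition cnt :: "int \<Rightarrow> nat \<Rightarrow> fam \<Rightarrow> int" where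
  "cnt p m f = (\<Sum>s\<in>{0..<p^m}. \<Sum>t\<in>{0..<p^m}. \<Sum>w\<in>{0..<p^m}. of_bool (V p m f s t w))"

lemma sum_swap3:
  "(\<Sum>s\<in>S. \<Sum>t\<in>T. \<Sum>w\<in>W. \<Sum>r\<in>R. F s t w r) = (\<Sum>r\<in>R. \<Sum>s\<in>S. \<Sum>t\<in>T. \<Sum>w\<in>W. F s t w r)"
proof -
  have "(\<Sum>s\<in>S. \<Sum>t\<in>T. \<Sum>w\<in>W. \<Sum>r\<in>R. F s t w r) = (\<Sum>s\<in>S. \<Sum>t\<in>T. \<Sum>r\<in>R. \<Sum>w\<in>W. F s t w r)"
    by (intro sum.cong refl sum.swap)
  also have "\<dots> = (\<Sum>s\<in>S. \<Sum>r\<in>R. \<Sum>t\<in>T. \<Sum>w\<in>W. F s t w r)"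
    by (intro sum.cong refl sum.swap)
  also have "\<dots> = (\<Sum>r\<in>R. \<Sum>s\<in>S. \<Sum>t\<in>T. \<Sum>w\<in>W. F s t w r)"
    by (rule sum.swap)
  finally show ?thesis .
qed

lemma cnt_formula:
  assumes p: "prime p" and A: "Adm p f"
  shows "2 * cnt p m f = p^(3*m) + p^(2*m)"
  using A
proof (induction m arbitrary: f)
  case 0
  have "{0..<(1::int)} = {0}" by auto
  then show ?case unfolding cnt_def by simp
next
  case (Suc m)
  have p0: "p > 0" using p prime_gt_0_int by blast
  have p1: "p > 1" using p prime_gt_1_int by blast
  define Q where "Q = p^m"
  have Q0: "Q > 0" unfolding Q_def using p0 by simp
  define a where "a = f 0 2 1"
  define A where "A = f 0 2 (Suc m)"
  define K where "K r = (r*f 1 1 (Suc m) + r^2*f 1 2 (Suc m)) div p" for r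
  have na: "\<not> p dvd a" using Suc.prems unfolding Adm_def a_def by blast
  define W where "W r x s z = (of_bool (V p m (stp p f r) x s z) :: int)" for r x s z
  have IDC: "of_bool (V p (Suc m) f s t w) = of_bool (simp_root p a t w) +
     (\<Sum>r\<in>{0..<p}. of_bool (dbl p a t w r) * W r (((t + 2*r*A) div p) mod Q) ((s + K r) mod Q) (((w + (r*t + r^2*A)) div p) mod Q))" for s t w
  proof -
    have Vs: "V p (Suc m) f s t w = (simp_root p a t w \<or> (\<exists>r\<in>{0..<p}. dbl p a t w r \<and> V p m (stp p f r) (((t + 2*r*A) div p) mod Q) ((s + K r) mod Q) (((w + (r*t + r^2*A)) div p) mod Q)))"
      unfolding a_def A_def K_def Q_def by simp
    show ?thesis
    proof (cases "simp_root p a t w")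
      case True
      then have "\<not> dbl p a t w r" for r using simp_not_dbl[OF p na] by blast
      then show ?thesis unfolding Vs using True by simp
    next
      case False
      have "of_bool (V p (Suc m) f s t w) = (of_bool (\<exists>r\<in>{0..<p}. dbl p a t w r \<and> V p m (stp p f r) (((t + 2*r*A) div p) mod Q) ((s + K r) mod Q) (((w + (r*t + r^2*A)) div p) mod Q)) :: int)"
        unfolding Vs using False by simp
      also have "\<dots> = (\<Sum>r\<in>{0..<p}. of_bool (dbl p a t w r \<and> V p m (stp p f r) (((t + 2*r*A) div p) mod Q) ((s + K r) mod Q) (((w + (r*t + r^2*A)) div p) mod Q)))"
        by (rule of_bool_ex_unique) (auto intro: dbl_unique[OF p na])
      also have "\<dots> = (\<Sum>r\<in>{0..<p}. of_bool (dbl p a t w r) * W r (((t + 2*r*A) div p) mod Q) ((s + K r) mod Q) (((w + (r*t + r^2*A)) div p) mod Q))"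
        unfolding W_def by (intro sum.cong refl) simp
      finally show ?thesis using False by simp
    qed
  qed
  define Ss where "Ss = (\<Sum>t\<in>{0..<p}. \<Sum>w\<in>{0..<p}. of_bool (simp_root p a t w) :: int)"
  have S1: "(\<Sum>s\<in>{0..<p^Suc m}. \<Sum>t\<in>{0..<p^Suc m}. \<Sum>w\<in>{0..<p^Suc m}. of_bool (simp_root p a t w) :: int)
      = p^Suc m * (Q * Q * Ss)"
  proof -
    have inner: "(\<Sum>w\<in>{0..<p^Suc m}. of_bool (simp_root p a t w) :: int) = Q * (\<Sum>w\<in>{0..<p}. of_bool (simp_root p a t w))" for t
    proof -
      have "(\<Sum>w\<in>{0..<p^Suc m}. of_bool (simp_root p a t w) :: int) = (\<Sum>w\<in>{0..<p^Suc m}. of_bool (simp_root p a t w) * (\<lambda>x. 1) (((w + 0) div p) mod p^m))"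
        by simp
      also have "\<dots> = (\<Sum>w0\<in>{0..<p}. of_bool (simp_root p a t w0)) * (\<Sum>x\<in>{0..<p^m}. (\<lambda>x. 1::int) x)"
        by (rule sum_LT[OF p0]) (simp add: simp_root_w simp_root_t)
      finally show ?thesis unfolding Q_def using p0 by (simp add: mult.commute)
    qed
    have outer: "(\<Sum>t\<in>{0..<p^Suc m}. (\<Sum>w\<in>{0..<p}. of_bool (simp_root p a t w)) :: int) = Q * Ss"
    proof -
      have "(\<Sum>t\<in>{0..<p^Suc m}. (\<Sum>w\<in>{0..<p}. of_bool (simp_root p a t w)) :: int) = (\<Sum>t\<in>{0..<p^Suc m}. (\<Sum>w\<in>{0..<p}. of_bool (simp_root p a t w)) * (\<lambda>x. 1) (((t + 0) div p) mod p^m))"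
        by simp
      also have "\<dots> = (\<Sum>t0\<in>{0..<p}. (\<Sum>w\<in>{0..<p}. of_bool (simp_root p a t0 w))) * (\<Sum>x\<in>{0..<p^m}. (\<lambda>x. 1::int) x)"
        by (rule sum_LT[OF p0]) (simp add: simp_root_w simp_root_t)
      finally show ?thesis unfolding Q_def Ss_def using p0 by (simp add: mult.commute)
    qed
    have "(\<Sum>s\<in>{0..<p^Suc m}. \<Sum>t\<in>{0..<p^Suc m}. \<Sum>w\<in>{0..<p^Suc m}. of_bool (simp_root p a t w) :: int)
        = (\<Sum>s\<in>{0..<p^Suc m}. \<Sum>t\<in>{0..<p^Suc m}. Q * (\<Sum>w\<in>{0..<p}. of_bool (simp_root p a t w)))"
      by (simp only: inner)
    also have "\<dots> = (\<Sum>s\<in>{0..<p^Suc m}. Q * (\<Sum>t\<in>{0..<p^Suc m}. (\<Sum>w\<in>{0..<p}. of_bool (simp_root p a t w))))"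
      by (simp only: sum_distrib_left)
    also have "\<dots> = (\<Sum>s\<in>{0..<p^Suc m}. Q * (Q * Ss))"
      by (simp only: outer)
    also have "\<dots> = p^Suc m * (Q * Q * Ss)" using p0 by simp
    finally show ?thesis .
  qed
  have S2: "(\<Sum>s\<in>{0..<p^Suc m}. \<Sum>t\<in>{0..<p^Suc m}. \<Sum>w\<in>{0..<p^Suc m}.
        of_bool (dbl p a t w r) * W r (((t + 2*r*A) div p) mod Q) ((s + K r) mod Q) (((w + (r*t + r^2*A)) div p) mod Q))
      = p * cnt p m (stp p f r)" for r
  proof -
    define H where "H x z = (\<Sum>s\<in>{0..<Q}. W r x s z)" for x z
    have "(\<Sum>s\<in>{0..<p^Suc m}. \<Sum>t\<in>{0..<p^Suc m}. \<Sum>w\<in>{0..<p^Suc m}.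
        of_bool (dbl p a t w r) * W r (((t + 2*r*A) div p) mod Q) ((s + K r) mod Q) (((w + (r*t + r^2*A)) div p) mod Q))
      = (\<Sum>t\<in>{0..<p^Suc m}. \<Sum>w\<in>{0..<p^Suc m}. \<Sum>s\<in>{0..<p^Suc m}.
        of_bool (dbl p a t w r) * W r (((t + 2*r*A) div p) mod Q) ((s + K r) mod Q) (((w + (r*t + r^2*A)) div p) mod Q))"
      by (subst sum.swap) (intro sum.cong refl sum.swap)
    also have "\<dots> = (\<Sum>t\<in>{0..<p^Suc m}. \<Sum>w\<in>{0..<p^Suc m}.
        of_bool (dbl p a t w r) * (p * H (((t + 2*r*A) div p) mod Q) (((w + (r*t + r^2*A)) div p) mod Q)))"
    proof (intro sum.cong refl)
      fix t w
      define X where "X = ((t + 2*r*A) div p) mod Q"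
      define Z where "Z = ((w + (r*t + r^2*A)) div p) mod Q"
      have e: "(\<Sum>s\<in>{0..<p^Suc m}. W r X ((s + K r) mod Q) Z) = p * H X Z"
        unfolding H_def Q_def by (rule sum_LS[OF p0, where h = "\<lambda>s. W r X s Z" and K = "K r" and m = m])
      have "(\<Sum>s\<in>{0..<p^Suc m}. of_bool (dbl p a t w r) * W r X ((s + K r) mod Q) Z)
          = of_bool (dbl p a t w r) * (\<Sum>s\<in>{0..<p^Suc m}. W r X ((s + K r) mod Q) Z)"
        by (rule sum_distrib_left[symmetric])
      also have "\<dots> = of_bool (dbl p a t w r) * (p * H X Z)" unfolding e ..
      finally show "(\<Sum>s\<in>{0..<p^Suc m}. of_bool (dbl p a t w r) * W r (((t + 2*r*A) div p) mod Q) ((s + K r) mod Q) (((w + (r*t + r^2*A)) div p) mod Q))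
          = of_bool (dbl p a t w r) * (p * H (((t + 2*r*A) div p) mod Q) (((w + (r*t + r^2*A)) div p) mod Q))"
        unfolding X_def Z_def .
    qed
    also have "\<dots> = p * (\<Sum>t\<in>{0..<p^Suc m}. \<Sum>w\<in>{0..<p^Suc m}.
        of_bool (dbl p a t w r) * H (((t + 2*r*A) div p) mod Q) (((w + (r*t + r^2*A)) div p) mod Q))"
      by (simp only: sum_distrib_left mult.left_commute)
    also have "\<dots> = p * (\<Sum>t\<in>{0..<p^Suc m}. (\<Sum>w0\<in>{0..<p}. of_bool (dbl p a t w0 r)) *
        (\<Sum>z\<in>{0..<Q}. H (((t + 2*r*A) div p) mod Q) z))"
      unfolding Q_def
      by (intro arg_cong[where f = "\<lambda>x. p * x"] sum.cong refl sum_LT[OF p0])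
         (simp add: dbl_w dbl_t)
    also have "\<dots> = p * ((\<Sum>t0\<in>{0..<p}. \<Sum>w0\<in>{0..<p}. of_bool (dbl p a t0 w0 r)) *
        (\<Sum>x\<in>{0..<Q}. \<Sum>z\<in>{0..<Q}. H x z))"
      unfolding Q_def
      by (intro arg_cong[where f = "\<lambda>x. p * x"] sum_LT[OF p0, where h = "\<lambda>x. \<Sum>z\<in>{0..<p^m}. H x z"
            and F = "\<lambda>t. \<Sum>w0\<in>{0..<p}. of_bool (dbl p a t w0 r)" and c = "2*r*A" and m = m])
         (simp add: dbl_t)
    also have "\<dots> = p * (\<Sum>x\<in>{0..<Q}. \<Sum>z\<in>{0..<Q}. H x z)"
      using count_quad(3)[OF p na] by simp
    also have "(\<Sum>x\<in>{0..<Q}. \<Sum>z\<in>{0..<Q}. H x z) = cnt p m (stp p f r)"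
      unfolding H_def cnt_def W_def Q_def by (intro sum.cong refl sum.swap)
    finally show ?thesis .
  qed
  have "cnt p (Suc m) f = (\<Sum>s\<in>{0..<p^Suc m}. \<Sum>t\<in>{0..<p^Suc m}. \<Sum>w\<in>{0..<p^Suc m}. of_bool (simp_root p a t w))
     + (\<Sum>s\<in>{0..<p^Suc m}. \<Sum>t\<in>{0..<p^Suc m}. \<Sum>w\<in>{0..<p^Suc m}. \<Sum>r\<in>{0..<p}.
        of_bool (dbl p a t w r) * W r (((t + 2*r*A) div p) mod Q) ((s + K r) mod Q) (((w + (r*t + r^2*A)) div p) mod Q))"
    unfolding cnt_def IDC by (simp add: sum.distrib)
  also have "\<dots> = p^Suc m * (Q * Q * Ss) + (\<Sum>r\<in>{0..<p}. p * cnt p m (stp p f r))"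
    unfolding S1 sum_swap3 S2 ..
  finally have c: "cnt p (Suc m) f = p^Suc m * (Q * Q * Ss) + (\<Sum>r\<in>{0..<p}. p * cnt p m (stp p f r))" .
  have IH: "2 * cnt p m (stp p f r) = Q^3 + Q^2" for r
    using Suc.IH[OF Adm_step[OF p1 Suc.prems]] unfolding Q_def by (simp add: power_mult[symmetric] mult.commute)
  have "2 * (\<Sum>r\<in>{0..<p}. p * cnt p m (stp p f r)) = (\<Sum>r\<in>{0..<p}. p * (2 * cnt p m (stp p f r)))"
    by (simp only: sum_distrib_left mult.left_commute)
  also have "\<dots> = (\<Sum>r\<in>{0..<p}. p * (Q^3 + Q^2))"
    by (simp only: IH)
  also have "\<dots> = p * p * (Q^3 + Q^2)" using p0 by simp
  finally have c2: "2 * (\<Sum>r\<in>{0..<p}. p * cnt p m (stp p f r)) = p * p * (Q^3 + Q^2)" .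
  have Ssv: "2 * Ss + p = p^2"
  proof -
    have "(\<Sum>t\<in>{0..<p}. \<Sum>w\<in>{0..<p}. 2 * of_bool (simp_root p a t w) + of_bool (\<exists>r\<in>{0..<p}. dbl p a t w r)) = 2 * Ss + (\<Sum>t\<in>{0..<p}. \<Sum>w\<in>{0..<p}. of_bool (\<exists>r\<in>{0..<p}. dbl p a t w r) :: int)"
      unfolding Ss_def by (simp add: sum.distrib sum_distrib_left mult.commute)
    then show ?thesis using count_quad(1,2)[OF p na] by simp
  qed
  have "2 * cnt p (Suc m) f = p * Q * Q * Q * (2 * Ss) + p * p * (Q^3 + Q^2)"
    unfolding c using c2 unfolding Q_def by (simp add: algebra_simps)
  also have "\<dots> = p * Q * Q * Q * (p^2 - p) + p * p * (Q^3 + Q^2)"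
  proof -
    have e: "2 * Ss = p^2 - p" using Ssv by linarith
    show ?thesis by (simp only: e)
  qed
  also have "\<dots> = (p*Q)^3 + (p*Q)^2"
    by (simp add: power2_eq_square power3_eq_cube algebra_simps)
  also have "\<dots> = p^(3 * Suc m) + p^(2 * Suc m)"
    unfolding Q_def power_Suc[symmetric] power_mult[symmetric] by (simp add: mult.commute)
  finally show ?case .
qed



definition Zf :: "int \<Rightarrow> fam \<Rightarrow> bool" where
  "Zf p g \<longleftrightarrow> (\<exists>x y. cs p x \<and> cs p y \<and> (\<forall>n. p^n dvd ev g n (x n) (y n)))"

definition FamOK :: "int \<Rightarrow> fam \<Rightarrow> bool" where
  "FamOK p g \<longleftrightarrow> (\<forall>i\<le>2. \<forall>j\<le>2. cs p (g i j)) \<and> (\<forall>j\<le>2. p dvd g 1 j 1 \<and> p dvd g 2 j 1)"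

lemma dvd_diff_mult: "(M::int) dvd a - a' \<Longrightarrow> M dvd b - b' \<Longrightarrow> M dvd a*b - a'*b'"
proof -
  assume "M dvd a - a'" "M dvd b - b'"
  then have "M dvd a*(b - b') + b'*(a - a')" by simp
  then show ?thesis by (simp add: algebra_simps)
qed

lemma dvd_diff_pow: "(M::int) dvd a - a' \<Longrightarrow> M dvd a^k - a'^k"
  by (induction k) (simp_all add: dvd_diff_mult)

lemma dvd_iff_diff: "(M::int) dvd a - b \<Longrightarrow> M dvd a \<longleftrightarrow> M dvd b"
proof
  assume h: "M dvd a - b"
  show "M dvd b" if "M dvd a"
  proof -
    have "M dvd a - (a - b)" using that h by (rule dvd_diff)
    then show ?thesis by simp
  qed
  show "M dvd a" if "M dvd b"
  proof -
    have "M dvd b + (a - b)" using that h by (rule dvd_add)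
    then show ?thesis by simp
  qed
qed

lemma dvd_diff_trans: "(M::int) dvd a - b \<Longrightarrow> M dvd b - c \<Longrightarrow> M dvd a - c"
proof -
  assume "M dvd a - b" "M dvd b - c"
  then have "M dvd (a - b) + (b - c)" by (rule dvd_add)
  then show ?thesis by simp
qed

lemma ev_diff_dvd:
  assumes "\<And>i j. i \<le> 2 \<Longrightarrow> j \<le> 2 \<Longrightarrow> M dvd g i j n - g' i j n'" "M dvd x - x'" "M dvd y - y'"
  shows "M dvd ev g n x y - ev g' n' x' y'"
proof -
  have "ev g n x y - ev g' n' x' y' = (\<Sum>i\<le>2. \<Sum>j\<le>2. g i j n * x^i * y^j - g' i j n' * x'^i * y'^j)"
    unfolding ev_def by (simp add: sum_subtractf)
  also have "M dvd \<dots>"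
    by (intro dvd_sum dvd_diff_mult dvd_diff_pow assms) auto
  finally show ?thesis .
qed

lemma ev_eq:
  assumes "\<And>i j. i \<le> 2 \<Longrightarrow> j \<le> 2 \<Longrightarrow> g i j n = g' i j n"
  shows "ev g n x y = ev g' n x y"
  unfolding ev_def using assms by (intro sum.cong refl) auto

lemma Zf_cong:
  assumes "\<And>i j n. i \<le> 2 \<Longrightarrow> j \<le> 2 \<Longrightarrow> p^n dvd g i j n - g' i j n"
  shows "Zf p g = Zf p g'"
proof -
  have "p^n dvd ev g n x y \<longleftrightarrow> p^n dvd ev g' n x y" for n x y
  proof -
    have "p^n dvd ev g n x y - ev g' n x y" by (intro ev_diff_dvd assms) auto
    then show ?thesis by (rule dvd_iff_diff)
  qed
  then show ?thesis unfolding Zf_def by simp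
qed

lemma FamOK_cs: "FamOK p g \<Longrightarrow> i \<le> 2 \<Longrightarrow> j \<le> 2 \<Longrightarrow> cs p (g i j)"
  unfolding FamOK_def by blast

lemma FamOK_lvl1: "FamOK p g \<Longrightarrow> i \<le> 2 \<Longrightarrow> j \<le> 2 \<Longrightarrow> 1 \<le> n \<Longrightarrow> p dvd g i j n - g i j 1"
  using csD[OF FamOK_cs, of p g i j 1 n] by simp

lemma ev_modp:
  assumes "FamOK p g" "1 \<le> n"
  shows "p dvd ev g n x y - (g 0 2 1 * y^2 + g 0 1 1 * y + g 0 0 1)"
proof -
  have "p dvd ev g n x y - ev g 1 x y" by (intro ev_diff_dvd FamOK_lvl1[OF assms(1)] assms(2)) auto
  moreover have "p dvd ev g 1 x y - (g 0 2 1 * y^2 + g 0 1 1 * y + g 0 0 1)"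
  proof -
    have h: "p dvd g 1 j 1" "p dvd g 2 j 1" if "j \<le> 2" for j using assms(1) that unfolding FamOK_def by auto
    have "ev g 1 x y - (g 0 2 1 * y^2 + g 0 1 1 * y + g 0 0 1) =
      g 1 0 1 * x + g 1 1 1 * x * y + g 1 2 1 * x * y^2 + g 2 0 1 * x^2 + g 2 1 1 * x^2 * y + g 2 2 1 * x^2 * y^2"
      unfolding ev_expand by simp
    also have "p dvd \<dots>" using h[of 0] h[of 1] h[of 2] by simp
    finally show ?thesis .
  qed
  ultimately show ?thesis by (rule dvd_diff_trans)
qed

lemma divOK:
  assumes "FamOK p g" "dbl p (g 0 2 1) (g 0 1 1) (g 0 0 1) r" "j \<le> 2"
  shows "p dvd g j 0 (Suc n) + r * g j 1 (Suc n) + r^2 * g j 2 (Suc n)"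
proof -
  have d: "p dvd g j b (Suc n) - g j b 1" if "b \<le> 2" for b using FamOK_lvl1[OF assms(1) assms(3) that] by simp
  have "p dvd (g j 0 (Suc n) - g j 0 1) + r * (g j 1 (Suc n) - g j 1 1) + r^2 * (g j 2 (Suc n) - g j 2 1)"
    using d[of 0] d[of 1] d[of 2] by simp
  moreover have "p dvd g j 0 1 + r * g j 1 1 + r^2 * g j 2 1"
  proof -
    have "j = 0 \<or> j = 1 \<or> j = 2" using assms(3) by auto
    moreover have "p dvd g 0 0 1 + r * g 0 1 1 + r^2 * g 0 2 1"
      using assms(2) unfolding dbl_def by (simp add: algebra_simps)
    moreover have "p dvd g 1 0 1 + r * g 1 1 1 + r^2 * g 1 2 1" "p dvd g 2 0 1 + r * g 2 1 1 + r^2 * g 2 2 1"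
    proof -
      have h: "p dvd g 1 b 1" "p dvd g 2 b 1" if "b \<le> 2" for b using assms(1) that unfolding FamOK_def by blast+
      show "p dvd g 1 0 1 + r * g 1 1 1 + r^2 * g 1 2 1" using h(1)[of 0] h(1)[of 1] h(1)[of 2] by simp
      show "p dvd g 2 0 1 + r * g 2 1 1 + r^2 * g 2 2 1" using h(2)[of 0] h(2)[of 1] h(2)[of 2] by simp
    qed
    ultimately show ?thesis by (elim disjE) simp_all
  qed
  ultimately have "p dvd ((g j 0 (Suc n) - g j 0 1) + r * (g j 1 (Suc n) - g j 1 1) + r^2 * (g j 2 (Suc n) - g j 2 1)) + (g j 0 1 + r * g j 1 1 + r^2 * g j 2 1)"
    by (rule dvd_add)
  then show ?thesis by (simp add: algebra_simps)
qed

lemma Zf_step_bwd: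
  assumes p: "p > 1" and ok: "FamOK p g" and d: "dbl p (g 0 2 1) (g 0 1 1) (g 0 0 1) r" and Z: "Zf p (stp p g r)"
  shows "Zf p g"
proof -
  obtain u x where u: "cs p u" and x: "cs p x" and z: "\<And>n. p^n dvd ev (stp p g r) n (u n) (x n)"
    using Z unfolding Zf_def by blast
  define y where "y n = r + p * u n" for n
  have csy: "cs p y" unfolding cs_def y_def
  proof (intro allI impI)
    fix j k :: nat assume "j \<le> k"
    then have "p^j dvd u k - u j" using csD[OF u] by simp
    then have "p^j dvd p * (u k - u j)" by simp
    then show "p ^ j dvd r + p * u k - (r + p * u j)" by (simp add: algebra_simps)
  qed
  have "p^n dvd ev g n (x n) (y n)" for n
  proof -
    have e: "ev g (Suc n) (x n) (y n) = p * ev (stp p g r) n (u n) (x n)"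
      unfolding y_def using p by (intro idn[where f = g and r = r and p = p, OF _ divOK[OF ok d], symmetric]) auto
    have "p^n dvd p^(Suc n)" by (simp add: le_imp_power_dvd)
    moreover have "p^(Suc n) dvd ev g (Suc n) (x n) (y n)" unfolding e using z[of n] by simp
    ultimately have a: "p^n dvd ev g (Suc n) (x n) (y n)" by (rule dvd_trans)
    have "p^n dvd ev g n (x n) (y n) - ev g (Suc n) (x n) (y n)"
    proof (intro ev_diff_dvd)
      fix i j :: nat assume "i \<le> 2" "j \<le> 2"
      then have "p^n dvd g i j (Suc n) - g i j n" using csD[OF FamOK_cs[OF ok]] by simp
      then show "p^n dvd g i j n - g i j (Suc n)" by (simp add: dvd_diff_commute)
    qed auto
    note db = this
    show ?thesis using dvd_iff_diff[OF db] a by simp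
  qed
  then have zz: "\<And>n. p^n dvd ev g n (x n) (y n)" .
  show ?thesis unfolding Zf_def by (rule exI[of _ x], rule exI[of _ y]) (simp add: x csy zz)
qed

lemma Zf_step_fwd:
  assumes p: "prime p" and ok: "FamOK p g" and na: "\<not> p dvd g 0 2 1"
    and d: "dbl p (g 0 2 1) (g 0 1 1) (g 0 0 1) r" and r: "r \<in> {0..<p}" and Z: "Zf p g"
  shows "Zf p (stp p g r)"
proof -
  have p1: "p > 1" using p prime_gt_1_int by blast
  obtain x y where x: "cs p x" and y: "cs p y" and z: "\<And>n. p^n dvd ev g n (x n) (y n)"
    using Z unfolding Zf_def by blast
  have "p dvd ev g 1 (x 1) (y 1)" using z[of 1] by simp
  then have "p dvd g 0 2 1 * (y 1)^2 + g 0 1 1 * y 1 + g 0 0 1"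
    using dvd_iff_diff[OF ev_modp[OF ok, of 1 "x 1" "y 1"]] by simp
  then have y1: "p dvd y 1 - r" using dbl_root_unique[OF p na d] by blast
  have yr: "p dvd y (Suc n) - r" for n
  proof -
    have "p dvd y (Suc n) - y 1" using csD[OF y, of 1 "Suc n"] by simp
    then show ?thesis using y1 by (rule dvd_diff_trans)
  qed
  define u where "u n = (y (Suc n) - r) div p" for n
  have pu: "p * u n = y (Suc n) - r" for n unfolding u_def using yr[of n] by simp
  define x' where "x' n = x (Suc n)" for n
  have csu: "cs p u" unfolding cs_def
  proof (intro allI impI)
    fix j k :: nat assume "j \<le> k"
    then have "p^(Suc j) dvd y (Suc k) - y (Suc j)" using csD[OF y, of "Suc j" "Suc k"] by simp
    also have "y (Suc k) - y (Suc j) = p * (u k - u j)" using pu[of k] pu[of j] by (simp add: algebra_simps)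
    finally have "p * p^j dvd p * (u k - u j)" by simp
    then show "p^j dvd u k - u j" using p1 by simp
  qed
  have csx': "cs p x'" unfolding x'_def by (rule cs_shift[OF x])
  have "p^n dvd ev (stp p g r) n (u n) (x' n)" for n
  proof -
    have "ev g (Suc n) (x' n) (r + p * u n) = p * ev (stp p g r) n (u n) (x' n)"
      using p1 by (intro idn[where f = g and r = r and p = p, OF _ divOK[OF ok d], symmetric]) auto
    moreover have "r + p * u n = y (Suc n)" using pu[of n] by simp
    ultimately have "p * ev (stp p g r) n (u n) (x' n) = ev g (Suc n) (x (Suc n)) (y (Suc n))"
      unfolding x'_def by simp
    then have "p * p^n dvd p * ev (stp p g r) n (u n) (x' n)" using z[of "Suc n"] by simp
    then show ?thesis using p1 by simp
  qed
  then have zz: "\<And>n. p^n dvd ev (stp p g r) n (u n) (x' n)" .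
  show ?thesis unfolding Zf_def by (rule exI[of _ u], rule exI[of _ x']) (simp add: csu csx' zz)
qed



lemma hensel:
  fixes p :: int and a t w :: "nat \<Rightarrow> int"
  assumes p: "prime p" and ca: "cs p a" and ct: "cs p t" and cw: "cs p w"
    and r0: "p dvd a 1 * y0^2 + t 1 * y0 + w 1" and r1: "\<not> p dvd 2 * a 1 * y0 + t 1"
  shows "\<exists>y. cs p y \<and> (\<forall>n. p^n dvd a n * (y n)^2 + t n * y n + w n)"
proof -
  have p1: "p > 1" using p prime_gt_1_int by blast
  define q where "q n z = a n * z^2 + t n * z + w n" for n z
  define Inv where "Inv n z \<longleftrightarrow> p^n dvd q n z \<and> \<not> p dvd 2 * a 1 * z + t 1" for n z
  have step: "\<exists>k. Inv n z \<longrightarrow> Inv (Suc n) (z + p^n * k)" for n z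
  proof (cases "Inv n z")
    case False then show ?thesis by blast
  next
    case True
    show ?thesis
    proof (cases n)
      case 0
      have "Inv (Suc n) (z + p^n * (y0 - z))" unfolding Inv_def q_def 0 using r0 r1 by simp
      then show ?thesis by blast
    next
      case (Suc n')
      have dq: "p^n dvd q (Suc n) z - q n z"
      proof -
        have "q (Suc n) z - q n z = (a (Suc n) - a n) * z^2 + (t (Suc n) - t n) * z + (w (Suc n) - w n)"
          unfolding q_def by (simp add: algebra_simps)
        also have "p^n dvd \<dots>" using csD[OF ca, of n "Suc n"] csD[OF ct, of n "Suc n"] csD[OF cw, of n "Suc n"] by simp
        finally show ?thesis .
      qed
      have "p^n dvd q n z" using True unfolding Inv_def by blast
      then have "p^n dvd q (Suc n) z" using dvd_iff_diff[OF dq] by simp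
      then obtain m where m: "q (Suc n) z = p^n * m" by blast
      define DD where "DD = 2 * a (Suc n) * z + t (Suc n)"
      have "p dvd DD - (2 * a 1 * z + t 1)"
      proof -
        have "DD - (2 * a 1 * z + t 1) = 2 * z * (a (Suc n) - a 1) + (t (Suc n) - t 1)"
          unfolding DD_def by (simp add: algebra_simps)
        also have "p dvd \<dots>" using csD[OF ca, of 1 "Suc n"] csD[OF ct, of 1 "Suc n"] by simp
        finally show ?thesis .
      qed
      then have nD: "\<not> p dvd DD" using True dvd_iff_diff unfolding Inv_def by blast
      obtain Di l where Dl: "DD * Di = 1 + p * l" using inv_mod_prime[OF p nD] by blast
      define k where "k = - m * Di"
      have "q (Suc n) (z + p^n * k) = q (Suc n) z + p^n * k * DD + p^n * p^n * (a (Suc n) * k^2)"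
        unfolding q_def DD_def by (simp add: power2_eq_square algebra_simps)
      also have "p^n * k * DD = - (p^n * m * (DD * Di))" unfolding k_def by (simp add: algebra_simps)
      also have "\<dots> = - (p^n * m) - p^Suc n * (m * l)" unfolding Dl by (simp add: algebra_simps)
      finally have e: "q (Suc n) (z + p^n * k) = p^Suc n * (- m * l) + p^n * p^n * (a (Suc n) * k^2)"
        unfolding m by (simp add: algebra_simps)
      have "p^Suc n dvd p^n * p^n"
      proof -
        have "p^n * p^n = p^(n + n)" by (simp add: power_add)
        moreover have "Suc n \<le> n + n" using Suc by simp
        ultimately show ?thesis using le_imp_power_dvd[of "Suc n" "n + n" p] by simp
      qed
      then have d1: "p^Suc n dvd q (Suc n) (z + p^n * k)" unfolding e by simp
      have "p dvd p^n" using Suc by simp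
      then have "p dvd (2 * a 1 * (z + p^n * k) + t 1) - (2 * a 1 * z + t 1)" by (simp add: algebra_simps)
      then have "\<not> p dvd 2 * a 1 * (z + p^n * k) + t 1" using True dvd_iff_diff unfolding Inv_def by blast
      then have "Inv (Suc n) (z + p^n * k)" using d1 unfolding Inv_def by blast
      then show ?thesis by blast
    qed
  qed
  define kf where "kf n z = (SOME k. Inv n z \<longrightarrow> Inv (Suc n) (z + p^n * k))" for n z
  have kf: "Inv n z \<Longrightarrow> Inv (Suc n) (z + p^n * kf n z)" for n z
    using someI_ex[OF step[of n z]] unfolding kf_def by blast
  define Y where "Y = rec_nat y0 (\<lambda>n z. z + p^n * kf n z)"
  have Y0: "Y 0 = y0" and YS: "Y (Suc n) = Y n + p^n * kf n (Y n)" for n unfolding Y_def by simp_all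
  have I: "Inv n (Y n)" for n
  proof (induction n)
    case 0 then show ?case unfolding Y0 Inv_def using r1 by simp
  next
    case (Suc n) then show ?case unfolding YS by (rule kf)
  qed
  have "cs p Y" by (rule csI) (simp add: YS)
  moreover have "p^n dvd a n * (Y n)^2 + t n * Y n + w n" for n using I[of n] unfolding Inv_def q_def by blast
  ultimately show ?thesis by blast
qed

lemma Zf_chain:
  assumes p: "p > 1" and ok: "\<And>k. FamOK p (gs k)" and d: "\<And>k. dbl p (gs k 0 2 1) (gs k 0 1 1) (gs k 0 0 1) (rs k)"
    and st: "\<And>k i j n. i \<le> 2 \<Longrightarrow> j \<le> 2 \<Longrightarrow> gs (Suc k) i j n = stp p (gs k) (rs k) i j n"
  shows "Zf p (gs 0)"
proof -
  define W where "W j n = (\<Sum>i<n. p^i * rs (j + 2*i))" for j n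
  have WS: "W j (Suc n) = rs j + p * W (Suc (Suc j)) n" for j n
  proof -
    have "W j (Suc n) = rs j + (\<Sum>i<n. p^Suc i * rs (j + 2 * Suc i))"
      unfolding W_def by (subst sum.lessThan_Suc_shift) simp
    also have "(\<Sum>i<n. p^Suc i * rs (j + 2 * Suc i)) = p * W (Suc (Suc j)) n"
      unfolding W_def sum_distrib_left by (intro sum.cong refl) simp
    finally show ?thesis .
  qed
  have csW: "cs p (W j)" for j by (rule csI) (simp add: W_def)
  have main: "p^n dvd ev (gs j) n (W (Suc j) n) (W j n)" for n j
  proof (induction n arbitrary: j)
    case 0 show ?case by simp
  next
    case (Suc n)
    have e1: "ev (gs j) (Suc n) (W (Suc j) (Suc n)) (W j (Suc n)) = p * ev (stp p (gs j) (rs j)) n (W (Suc (Suc j)) n) (W (Suc j) (Suc n))"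
      unfolding WS[of j n] using p
      by (intro idn[where f = "gs j" and r = "rs j" and p = p, OF _ divOK[OF ok d], symmetric]) auto
    have e2: "ev (stp p (gs j) (rs j)) n u x = ev (gs (Suc j)) n u x" for u x by (rule ev_eq) (simp add: st)
    have "p^n dvd ev (gs (Suc j)) n (W (Suc (Suc j)) n) (W (Suc j) (Suc n)) - ev (gs (Suc j)) n (W (Suc (Suc j)) n) (W (Suc j) n)"
      by (intro ev_diff_dvd) (simp_all add: csD[OF csW])
    then have "p^n dvd ev (gs (Suc j)) n (W (Suc (Suc j)) n) (W (Suc j) (Suc n))"
      using Suc.IH[of "Suc j"] dvd_iff_diff by blast
    then show ?case unfolding e1 e2 by simp
  qed
  have z: "p^n dvd ev (gs 0) n (W 1 n) (W 0 n)" for n using main[of n 0] by simp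
  show ?thesis unfolding Zf_def by (rule exI[of _ "W 1"], rule exI[of _ "W 0"]) (intro conjI allI csW z)
qed



definition mkfam :: "int \<Rightarrow> fam \<Rightarrow> (nat\<Rightarrow>int) \<Rightarrow> (nat\<Rightarrow>int) \<Rightarrow> (nat\<Rightarrow>int) \<Rightarrow> fam" where
  "mkfam p f C B E i j = (if i = 1 \<and> j = 0 then (\<lambda>n. p * C n) else if i = 0 \<and> j = 1 then B
      else if i = 0 \<and> j = 0 then E else f i j)"

lemma mkfam_simps:
  "mkfam p f C B E 1 0 = (\<lambda>n. p * C n)" "mkfam p f C B E 0 1 = B" "mkfam p f C B E 0 0 = E"
  "mkfam p f C B E 0 2 = f 0 2" "mkfam p f C B E 1 1 = f 1 1" "mkfam p f C B E 1 2 = f 1 2"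
  "mkfam p f C B E 2 j = f 2 j"
  "mkfam p f C B E (Suc 0) 0 = (\<lambda>n. p * C n)" "mkfam p f C B E 0 (Suc 0) = B"
  "mkfam p f C B E (Suc 0) (Suc 0) = f (Suc 0) (Suc 0)" "mkfam p f C B E (Suc 0) 2 = f (Suc 0) 2"
  by (simp_all add: mkfam_def)

definition Cn :: "int \<Rightarrow> fam \<Rightarrow> (nat\<Rightarrow>int) \<Rightarrow> int \<Rightarrow> nat \<Rightarrow> int" where
  "Cn p f B r n = (B (Suc n) + 2*r*f 0 2 (Suc n)) div p"
definition Bn :: "int \<Rightarrow> fam \<Rightarrow> (nat\<Rightarrow>int) \<Rightarrow> int \<Rightarrow> nat \<Rightarrow> int" where
  "Bn p f C r n = C (Suc n) + (r*f 1 1 (Suc n) + r^2*f 1 2 (Suc n)) div p"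
definition En :: "int \<Rightarrow> fam \<Rightarrow> (nat\<Rightarrow>int) \<Rightarrow> (nat\<Rightarrow>int) \<Rightarrow> int \<Rightarrow> nat \<Rightarrow> int" where
  "En p f B E r n = (E (Suc n) + (r*B (Suc n) + r^2*f 0 2 (Suc n))) div p"

lemma stp_1s: "stp p f r (Suc 0) j = (\<lambda>n. f j 1 (Suc n) + 2*r*f j 2 (Suc n))"
  using stp_1 by simp

lemma all9:
  fixes i j :: nat
  assumes "P 0 0" "P 0 1" "P 0 2" "P 1 0" "P 1 1" "P 1 2" "P 2 0" "P 2 1" "P 2 2" "i \<le> 2" "j \<le> 2"
  shows "P i j"
proof -
  have "i = 0 \<or> i = 1 \<or> i = 2" "j = 0 \<or> j = 1 \<or> j = 2" using assms(10,11) by auto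
  then show ?thesis using assms(1-9) by (elim disjE) simp_all
qed

lemma Adm_facts:
  assumes p: "p > 1" and A: "Adm p f"
  shows "\<And>n. 1 \<le> n \<Longrightarrow> p dvd f 2 2 n" "\<And>n. 1 \<le> n \<Longrightarrow> p dvd f 2 1 n" "\<And>n. 1 \<le> n \<Longrightarrow> p dvd f 2 0 n"
    "\<And>n. 1 \<le> n \<Longrightarrow> p dvd f 1 2 n" "\<And>n. 1 \<le> n \<Longrightarrow> p dvd f 1 1 n"
    "\<And>n. 1 \<le> n \<Longrightarrow> p dvd f 0 2 n - f 0 2 1" "\<not> p dvd f 0 2 1"
proof -
  note A' = A[unfolded Adm_def]
  have c22: "cs p (f 2 2)" and c21: "cs p (f 2 1)" and c20: "cs p (f 2 0)" and c12: "cs p (f 1 2)"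
    and c11: "cs p (f 1 1)" and c02: "cs p (f 0 2)" using A' by auto
  have d222: "p dvd f 2 2 2" using A' by (metis dvd_mult_left power2_eq_square)
  have d212: "p dvd f 2 1 2" using A' by (metis dvd_mult_left power2_eq_square)
  show "p dvd f 2 2 n" if "1 \<le> n" for n using cs_p1[OF c22 d222] that by simp
  show "p dvd f 2 1 n" if "1 \<le> n" for n using cs_p1[OF c21 d212] that by simp
  show "p dvd f 2 0 n" if "1 \<le> n" for n using cs_p1[OF c20, of 1] A' that by simp
  show "p dvd f 1 2 n" if "1 \<le> n" for n using cs_p1[OF c12, of 1] A' that by simp
  show "p dvd f 1 1 n" if "1 \<le> n" for n using cs_p1[OF c11, of 1] A' that by simp
  show "p dvd f 0 2 n - f 0 2 1" if "1 \<le> n" for n using csD[OF c02, of 1 n] that by simp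
  show "\<not> p dvd f 0 2 1" using A' by blast
qed

lemma mkfam_ok:
  assumes p: "p > 1" and A: "Adm p f" and C: "cs p C" and B: "cs p B" and E: "cs p E"
  shows "FamOK p (mkfam p f C B E)"
proof -
  note A' = A[unfolded Adm_def]
  have F: "cs p (\<lambda>n. p * C n)" "cs p (f 2 2)" "cs p (f 2 1)" "cs p (f 2 0)" "cs p (f 1 2)" "cs p (f 1 1)" "cs p (f 0 2)"
    using A' cs_cmul[OF C] by auto
  have cs: "cs p (mkfam p f C B E i j)" if "i \<le> 2" "j \<le> 2" for i j
    by (rule all9[OF _ _ _ _ _ _ _ _ _ that]) (simp_all only: mkfam_simps F B E)
  have G: "p dvd p * C 1" "p dvd f 1 1 1" "p dvd f 1 2 1" "p dvd f 2 0 1" "p dvd f 2 1 1" "p dvd f 2 2 1"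
    using Adm_facts(1)[OF p A, of 1] Adm_facts(2)[OF p A, of 1] Adm_facts(3)[OF p A, of 1]
      Adm_facts(4)[OF p A, of 1] Adm_facts(5)[OF p A, of 1] by auto
  have d: "p dvd mkfam p f C B E 1 j 1 \<and> p dvd mkfam p f C B E 2 j 1" if "j \<le> 2" for j
    by (rule all9[where P = "\<lambda>i j. p dvd mkfam p f C B E 1 j 1 \<and> p dvd mkfam p f C B E 2 j 1", OF _ _ _ _ _ _ _ _ _ order_refl that])
      (simp_all only: mkfam_simps G simp_thms)
  show ?thesis unfolding FamOK_def using cs d by blast
qed

lemma div_pc: "(p::int) \<noteq> 0 \<Longrightarrow> (p * c + a + b) div p = c + (a + b) div p"
proof -
  assume p: "p \<noteq> 0"
  have "p * c + a + b = (a + b) + p * c" by simp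
  then have "(p * c + a + b) div p = ((a + b) + p * c) div p" by (rule arg_cong)
  also have "\<dots> = c + (a + b) div p" using div_mult_self2[OF p, of "a + b" c] by simp
  finally show ?thesis .
qed

lemma Cn_dvd:
  assumes p: "p > 1" and A: "Adm p f" and B: "cs p B" and d: "dbl p (f 0 2 1) (B 1) (E 1) r"
  shows "p dvd B (Suc n) + 2*r*f 0 2 (Suc n)"
proof -
  have "p dvd B (Suc n) - B 1" using csD[OF B, of 1 "Suc n"] by simp
  moreover have "p dvd f 0 2 (Suc n) - f 0 2 1" using Adm_facts(6)[OF p A] by simp
  ultimately have "p dvd (B (Suc n) - B 1) + 2*r*(f 0 2 (Suc n) - f 0 2 1)" by simp
  moreover have "p dvd 2*f 0 2 1*r + B 1" using d unfolding dbl_def by simp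
  ultimately have "p dvd ((B (Suc n) - B 1) + 2*r*(f 0 2 (Suc n) - f 0 2 1)) + (2*f 0 2 1*r + B 1)" by (rule dvd_add)
  then show ?thesis by (simp add: algebra_simps)
qed

lemma En_dvd:
  assumes p: "p > 1" and A: "Adm p f" and B: "cs p B" and E: "cs p E" and d: "dbl p (f 0 2 1) (B 1) (E 1) r"
  shows "p dvd E (Suc n) + (r*B (Suc n) + r^2*f 0 2 (Suc n))"
proof -
  have "p dvd B (Suc n) - B 1" using csD[OF B, of 1 "Suc n"] by simp
  moreover have "p dvd E (Suc n) - E 1" using csD[OF E, of 1 "Suc n"] by simp
  moreover have "p dvd f 0 2 (Suc n) - f 0 2 1" using Adm_facts(6)[OF p A] by simp
  ultimately have "p dvd (E (Suc n) - E 1) + r*(B (Suc n) - B 1) + r^2*(f 0 2 (Suc n) - f 0 2 1)" by simp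
  moreover have "p dvd f 0 2 1 * r^2 + B 1 * r + E 1" using d unfolding dbl_def by simp
  ultimately have "p dvd ((E (Suc n) - E 1) + r*(B (Suc n) - B 1) + r^2*(f 0 2 (Suc n) - f 0 2 1)) + (f 0 2 1 * r^2 + B 1 * r + E 1)" by (rule dvd_add)
  then show ?thesis by (simp add: algebra_simps)
qed

lemma cs_new:
  assumes p: "p > 1" and A: "Adm p f" and C: "cs p C" and B: "cs p B" and E: "cs p E" and d: "dbl p (f 0 2 1) (B 1) (E 1) r"
  shows "cs p (Cn p f B r)" "cs p (Bn p f C r)" "cs p (En p f B E r)"
proof -
  note A' = A[unfolded Adm_def]
  have p0: "p \<noteq> 0" using p by simp
  have "cs p (\<lambda>n. (B (Suc n) + 2*r*f 0 2 (Suc n)) div p)"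
    by (rule cs_div[OF p0, where N = "\<lambda>n. B n + 2*r*f 0 2 n"]) (use A' B Cn_dvd[where B = B and E = E and r = r and f = f, OF p A B d] in \<open>auto intro: cs_add cs_cmul\<close>)
  then show "cs p (Cn p f B r)" unfolding Cn_def[abs_def] .
  have "cs p (\<lambda>n. (r*f 1 1 (Suc n) + r^2*f 1 2 (Suc n)) div p)"
    by (rule cs_div[OF p0, where N = "\<lambda>n. r*f 1 1 n + r^2*f 1 2 n"]) (use A' Adm_facts[OF p A] in \<open>auto intro: cs_add cs_cmul\<close>)
  then show "cs p (Bn p f C r)" unfolding Bn_def[abs_def] by (rule cs_add[OF cs_shift[OF C]])
  have "cs p (\<lambda>n. (E (Suc n) + (r*B (Suc n) + r^2*f 0 2 (Suc n))) div p)"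
    by (rule cs_div[OF p0, where N = "\<lambda>n. E n + (r*B n + r^2*f 0 2 n)"])
       (rule cs_add[OF E cs_add[OF cs_cmul[OF B] cs_cmul]], use A' in blast,
        rule En_dvd[where B = B and E = E and r = r and f = f, OF p A B E d])
  then show "cs p (En p f B E r)" unfolding En_def[abs_def] .
qed

lemma mkfam_step:
  assumes p: "p > 1" and A: "Adm p f" and B: "cs p B" and E: "cs p E" and d: "dbl p (f 0 2 1) (B 1) (E 1) r"
    and ij: "i \<le> 2" "j \<le> 2"
  shows "stp p (mkfam p f C B E) r i j n = mkfam p (stp p f r) (Cn p f B r) (Bn p f C r) (En p f B E r) i j n"
proof -
  have p0: "p \<noteq> 0" using p by simp
  have c10: "stp p (mkfam p f C B E) r 1 0 n = mkfam p (stp p f r) (Cn p f B r) (Bn p f C r) (En p f B E r) 1 0 n"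
    using Cn_dvd[where B = B and E = E and r = r and f = f, OF p A B d, of n] unfolding mkfam_simps Cn_def stp_1 by simp
  have c01: "stp p (mkfam p f C B E) r 0 1 n = mkfam p (stp p f r) (Cn p f B r) (Bn p f C r) (En p f B E r) 0 1 n"
    unfolding mkfam_simps Bn_def stp_0 using div_pc[OF p0] by simp
  have c00: "stp p (mkfam p f C B E) r 0 0 n = mkfam p (stp p f r) (Cn p f B r) (Bn p f C r) (En p f B E r) 0 0 n"
    unfolding mkfam_simps En_def stp_0 by (simp add: add.assoc)
  show ?thesis
    by (rule all9[where P = "\<lambda>i j. stp p (mkfam p f C B E) r i j n = mkfam p (stp p f r) (Cn p f B r) (Bn p f C r) (En p f B E r) i j n", OF _ _ _ _ _ _ _ _ _ ij])
       (simp_all only: c10 c01 c00, simp_all add: mkfam_simps stp_0 stp_1 stp_1s stp_2)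
qed

lemma SU:
  assumes p: "p > 0" and B: "cs p B" and E: "cs p E"
  shows "V p (Suc m) f (C (Suc m)) (B (Suc m)) (E (Suc m)) = (simp_root p (f 0 2 1) (B 1) (E 1) \<or>
     (\<exists>r\<in>{0..<p}. dbl p (f 0 2 1) (B 1) (E 1) r \<and> V p m (stp p f r) (Cn p f B r m) (Bn p f C r m) (En p f B E r m)))"
proof -
  have b: "p dvd B (Suc m) - B 1" using csD[OF B, of 1 "Suc m"] by simp
  have e: "p dvd E (Suc m) - E 1" using csD[OF E, of 1 "Suc m"] by simp
  have V': "V p m (stp p f r) (Cn p f B r m) (Bn p f C r m) (En p f B E r m) =
      V p m (stp p f r) (Cn p f B r m mod p^m) (Bn p f C r m mod p^m) (En p f B E r m mod p^m)" for r
    by (rule V_mod[OF p])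
  show ?thesis unfolding V' unfolding V.simps Cn_def Bn_def En_def
    using simp_root_mod[OF b e] dbl_mod[OF b e] by simp
qed



lemma quad_cong:
  fixes p :: int
  assumes "p dvd y - y'"
  shows "p dvd (a*y^2 + t*y + w) - (a*y'^2 + t*y' + w)"
proof -
  have "p dvd a*(y^2 - y'^2) + t*(y - y')" using dvd_diff_pow[OF assms, of 2] assms by simp
  then show ?thesis by (simp add: algebra_simps)
qed

lemma Zf_hensel:
  assumes p: "prime p" and ok: "FamOK p g" and s: "simp_root p (g 0 2 1) (g 0 1 1) (g 0 0 1)"
  shows "Zf p g"
proof -
  obtain y0 where y0: "p dvd g 0 2 1 * y0^2 + g 0 1 1 * y0 + g 0 0 1" "\<not> p dvd 2 * g 0 2 1 * y0 + g 0 1 1"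
    using s unfolding simp_root_def by blast
  obtain y where y: "cs p y" and z: "\<And>n. p^n dvd g 0 2 n * (y n)^2 + g 0 1 n * y n + g 0 0 n"
    using hensel[OF p FamOK_cs[OF ok] FamOK_cs[OF ok] FamOK_cs[OF ok] y0] by auto
  have zz: "p^n dvd ev g n ((\<lambda>n. 0) n) (y n)" for n
  proof -
    have "ev g n 0 (y n) = g 0 2 n * (y n)^2 + g 0 1 n * y n + g 0 0 n" unfolding ev_expand by simp
    then show ?thesis using z[of n] by simp
  qed
  show ?thesis unfolding Zf_def by (rule exI[of _ "\<lambda>n. 0"], rule exI[of _ y]) (intro conjI allI cs_const y zz)
qed

lemma ZV:
  assumes p: "prime p"
  shows "Adm p f \<Longrightarrow> cs p C \<Longrightarrow> cs p B \<Longrightarrow> cs p E \<Longrightarrow> Zf p (mkfam p f C B E) \<Longrightarrow> V p m f (C m) (B m) (E m)"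
proof (induction m arbitrary: f C B E)
  case 0 show ?case by simp
next
  case (Suc m)
  have p1: "p > 1" using p prime_gt_1_int by blast
  have p0: "p > 0" using p1 by simp
  note ok = mkfam_ok[OF p1 Suc.prems(1-4)]
  have na: "\<not> p dvd f 0 2 1" using Adm_facts(7)[OF p1 Suc.prems(1)] .
  obtain x y where y: "cs p y" and z: "\<And>n. p^n dvd ev (mkfam p f C B E) n (x n) (y n)"
    using Suc.prems(5) unfolding Zf_def by blast
  have "p dvd ev (mkfam p f C B E) 1 (x 1) (y 1)" using z[of 1] by simp
  then have q: "p dvd f 0 2 1 * (y 1)^2 + B 1 * y 1 + E 1"
    using dvd_iff_diff[OF ev_modp[OF ok, of 1 "x 1" "y 1"]] by (simp add: mkfam_simps)
  define y1 where "y1 = y 1 mod p"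
  have y1r: "y1 \<in> {0..<p}" unfolding y1_def using p0 by simp
  have "p dvd y 1 - y1" unfolding y1_def by (rule dvd_mod_diff) simp
  then have q1: "p dvd f 0 2 1 * y1^2 + B 1 * y1 + E 1" using q dvd_iff_diff[OF quad_cong] by blast
  show ?case unfolding SU[OF p0 Suc.prems(3,4)]
  proof (cases "p dvd 2 * f 0 2 1 * y1 + B 1")
    case False
    then have "simp_root p (f 0 2 1) (B 1) (E 1)" unfolding simp_root_def using y1r q1 by blast
    then show "simp_root p (f 0 2 1) (B 1) (E 1) \<or> (\<exists>r\<in>{0..<p}. dbl p (f 0 2 1) (B 1) (E 1) r \<and> V p m (stp p f r) (Cn p f B r m) (Bn p f C r m) (En p f B E r m))" by blast
  next
    case True
    then have d: "dbl p (f 0 2 1) (B 1) (E 1) y1" unfolding dbl_def using q1 by blast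
    have dg: "dbl p (mkfam p f C B E 0 2 1) (mkfam p f C B E 0 1 1) (mkfam p f C B E 0 0 1) y1"
      using d by (simp add: mkfam_simps)
    have na': "\<not> p dvd mkfam p f C B E 0 2 1" using na by (simp add: mkfam_simps)
    have Zs: "Zf p (stp p (mkfam p f C B E) y1)" by (rule Zf_step_fwd[OF p ok na' dg y1r Suc.prems(5)])
    have "Zf p (mkfam p (stp p f y1) (Cn p f B y1) (Bn p f C y1) (En p f B E y1))"
      using Zs Zf_cong[where g = "stp p (mkfam p f C B E) y1" and p = p and g' = "mkfam p (stp p f y1) (Cn p f B y1) (Bn p f C y1) (En p f B E y1)"]
        mkfam_step[OF p1 Suc.prems(1,3,4) d] by simp
    then have "V p m (stp p f y1) (Cn p f B y1 m) (Bn p f C y1 m) (En p f B E y1 m)"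
      using Suc.IH[OF Adm_step[OF p1 Suc.prems(1)] cs_new[OF p1 Suc.prems(1-4) d]] by blast
    then show "simp_root p (f 0 2 1) (B 1) (E 1) \<or> (\<exists>r\<in>{0..<p}. dbl p (f 0 2 1) (B 1) (E 1) r \<and> V p m (stp p f r) (Cn p f B r m) (Bn p f C r m) (En p f B E r m))"
      using d y1r by blast
  qed
qed

lemma Vmono:
  assumes p: "prime p"
  shows "Adm p f \<Longrightarrow> cs p C \<Longrightarrow> cs p B \<Longrightarrow> cs p E \<Longrightarrow> V p (Suc m) f (C (Suc m)) (B (Suc m)) (E (Suc m)) \<Longrightarrow> V p m f (C m) (B m) (E m)"
proof (induction m arbitrary: f C B E)
  case 0 show ?case by simp
next
  case (Suc m)
  have p1: "p > 1" using p prime_gt_1_int by blast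
  have p0: "p > 0" using p1 by simp
  have h: "simp_root p (f 0 2 1) (B 1) (E 1) \<or> (\<exists>r\<in>{0..<p}. dbl p (f 0 2 1) (B 1) (E 1) r \<and> V p (Suc m) (stp p f r) (Cn p f B r (Suc m)) (Bn p f C r (Suc m)) (En p f B E r (Suc m)))"
    using Suc.prems(5) unfolding SU[OF p0 Suc.prems(3,4)] .
  have "simp_root p (f 0 2 1) (B 1) (E 1) \<or> (\<exists>r\<in>{0..<p}. dbl p (f 0 2 1) (B 1) (E 1) r \<and> V p m (stp p f r) (Cn p f B r m) (Bn p f C r m) (En p f B E r m))"
  proof (cases "simp_root p (f 0 2 1) (B 1) (E 1)")
    case True then show ?thesis by blast
  next
    case False
    then obtain r where r: "r \<in> {0..<p}" "dbl p (f 0 2 1) (B 1) (E 1) r"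
      and v: "V p (Suc m) (stp p f r) (Cn p f B r (Suc m)) (Bn p f C r (Suc m)) (En p f B E r (Suc m))" using h by blast
    have "V p m (stp p f r) (Cn p f B r m) (Bn p f C r m) (En p f B E r m)"
      by (rule Suc.IH[OF Adm_step[OF p1 Suc.prems(1)] cs_new[OF p1 Suc.prems(1-4) r(2)] v])
    then show ?thesis using r by blast
  qed
  then show ?case unfolding SU[OF p0 Suc.prems(3,4)] .
qed



type_synonym st4 = "fam \<times> (nat \<Rightarrow> int) \<times> (nat \<Rightarrow> int) \<times> (nat \<Rightarrow> int)"

lemma VZ:
  assumes p: "prime p" and A: "Adm p f" and C: "cs p C" and B: "cs p B" and E: "cs p E"
    and V: "\<And>m. V p m f (C m) (B m) (E m)"
  shows "Zf p (mkfam p f C B E)"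
proof (rule ccontr)
  assume nZ: "\<not> Zf p (mkfam p f C B E)"
  have p1: "p > 1" using p prime_gt_1_int by blast
  have p0: "p > 0" using p1 by simp
  define Pst where "Pst st \<longleftrightarrow> (case st of (f, C, B, E) \<Rightarrow> Adm p f \<and> cs p C \<and> cs p B \<and> cs p E \<and>
      (\<forall>m. V p m f (C m) (B m) (E m)) \<and> \<not> Zf p (mkfam p f C B E))" for st :: st4
  define nxt where "nxt st r = (case st of (f, C, B, E) \<Rightarrow> (stp p f r, Cn p f B r, Bn p f C r, En p f B E r))" for st :: st4 and r
  define Dr where "Dr st r \<longleftrightarrow> (case st of (f, C, B, E) \<Rightarrow> r \<in> {0..<p} \<and> dbl p (f 0 2 1) (B 1) (E 1) r)" for st :: st4 and r
  define GG where "GG st = (case st of (f, C, B, E) \<Rightarrow> mkfam p f C B E)" for st :: st4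
  have stepP: "\<exists>r. Dr st r \<and> Pst (nxt st r)" if P: "Pst st" for st
  proof -
    obtain f1 C1 B1 E1 where st: "st = (f1, C1, B1, E1)" by (cases st) auto
    have A1: "Adm p f1" and C1: "cs p C1" and B1: "cs p B1" and E1: "cs p E1"
      and V1: "\<And>m. V p m f1 (C1 m) (B1 m) (E1 m)" and nZ1: "\<not> Zf p (mkfam p f1 C1 B1 E1)"
      using P unfolding Pst_def st by auto
    note ok = mkfam_ok[OF p1 A1 C1 B1 E1]
    have na: "\<not> p dvd f1 0 2 1" using Adm_facts(7)[OF p1 A1] .
    have ns: "\<not> simp_root p (f1 0 2 1) (B1 1) (E1 1)"
    proof
      assume "simp_root p (f1 0 2 1) (B1 1) (E1 1)"
      then have "simp_root p (mkfam p f1 C1 B1 E1 0 2 1) (mkfam p f1 C1 B1 E1 0 1 1) (mkfam p f1 C1 B1 E1 0 0 1)"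
        by (simp add: mkfam_simps)
      then show False using Zf_hensel[OF p ok] nZ1 by blast
    qed
    have Vs: "V p (Suc m) f1 (C1 (Suc m)) (B1 (Suc m)) (E1 (Suc m))" for m using V1 .
    have h: "\<exists>r\<in>{0..<p}. dbl p (f1 0 2 1) (B1 1) (E1 1) r \<and> V p m (stp p f1 r) (Cn p f1 B1 r m) (Bn p f1 C1 r m) (En p f1 B1 E1 r m)" for m
      using Vs[of m] ns unfolding SU[OF p0 B1 E1] by blast
    obtain r where r: "r \<in> {0..<p}" "dbl p (f1 0 2 1) (B1 1) (E1 1) r" using h[of 0] by blast
    have Vr: "V p m (stp p f1 r) (Cn p f1 B1 r m) (Bn p f1 C1 r m) (En p f1 B1 E1 r m)" for m
    proof -
      obtain r' where r': "r' \<in> {0..<p}" "dbl p (f1 0 2 1) (B1 1) (E1 1) r'"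
        and v: "V p m (stp p f1 r') (Cn p f1 B1 r' m) (Bn p f1 C1 r' m) (En p f1 B1 E1 r' m)" using h[of m] by blast
      have "r' = r" using dbl_unique[OF p na r'(2) r(2) r'(1) r(1)] .
      then show ?thesis using v by simp
    qed
    have nZ2: "\<not> Zf p (mkfam p (stp p f1 r) (Cn p f1 B1 r) (Bn p f1 C1 r) (En p f1 B1 E1 r))"
    proof
      assume Z2: "Zf p (mkfam p (stp p f1 r) (Cn p f1 B1 r) (Bn p f1 C1 r) (En p f1 B1 E1 r))"
      have "Zf p (stp p (mkfam p f1 C1 B1 E1) r)"
        using Z2 Zf_cong[where g = "stp p (mkfam p f1 C1 B1 E1) r" and p = p and g' = "mkfam p (stp p f1 r) (Cn p f1 B1 r) (Bn p f1 C1 r) (En p f1 B1 E1 r)"]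
          mkfam_step[OF p1 A1 B1 E1 r(2)] by simp
      moreover have "dbl p (mkfam p f1 C1 B1 E1 0 2 1) (mkfam p f1 C1 B1 E1 0 1 1) (mkfam p f1 C1 B1 E1 0 0 1) r"
        using r(2) by (simp add: mkfam_simps)
      ultimately have "Zf p (mkfam p f1 C1 B1 E1)" using Zf_step_bwd[OF p1 ok] by blast
      then show False using nZ1 by blast
    qed
    have "Dr st r" unfolding Dr_def st using r by simp
    moreover have "Pst (nxt st r)" unfolding Pst_def nxt_def st
      using Adm_step[OF p1 A1] cs_new[OF p1 A1 C1 B1 E1 r(2)] Vr nZ2 by simp
    ultimately show ?thesis by blast
  qed
  define R where "R st = (SOME r. Dr st r \<and> Pst (nxt st r))" for st
  have R: "Pst st \<Longrightarrow> Dr st (R st) \<and> Pst (nxt st (R st))" for st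
    unfolding R_def by (rule someI_ex[OF stepP])
  define sts where "sts k = ((\<lambda>st. nxt st (R st)) ^^ k) (f, C, B, E)" for k
  have sts0: "sts 0 = (f, C, B, E)" and stsS: "sts (Suc k) = nxt (sts k) (R (sts k))" for k
    unfolding sts_def by simp_all
  have P: "Pst (sts k)" for k
  proof (induction k)
    case 0 show ?case unfolding sts0 Pst_def using A C B E V nZ by simp
  next
    case (Suc k) then show ?case unfolding stsS using R by blast
  qed
  have "Zf p (GG (sts 0))"
  proof (rule Zf_chain[OF p1])
    fix k
    obtain f1 C1 B1 E1 where st: "sts k = (f1, C1, B1, E1)" by (cases "sts k") auto
    have A1: "Adm p f1" and C1: "cs p C1" and B1: "cs p B1" and E1: "cs p E1"
      using P[of k] unfolding Pst_def st by auto
    have D1: "R (sts k) \<in> {0..<p}" "dbl p (f1 0 2 1) (B1 1) (E1 1) (R (sts k))"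
      using R[OF P[of k]] unfolding Dr_def st by auto
    show "FamOK p (GG (sts k))" unfolding GG_def st using mkfam_ok[OF p1 A1 C1 B1 E1] by simp
    show "dbl p (GG (sts k) 0 2 1) (GG (sts k) 0 1 1) (GG (sts k) 0 0 1) (R (sts k))"
      unfolding GG_def st using D1 st by (simp add: mkfam_simps)
    show "GG (sts (Suc k)) i j n = stp p (GG (sts k)) (R (sts k)) i j n" if "i \<le> 2" "j \<le> 2" for i j n
      unfolding stsS GG_def nxt_def st using mkfam_step[OF p1 A1 B1 E1 D1(2) that, of C1 n] st by simp
  qed
  then show False using nZ unfolding GG_def sts0 by simp
qed



lemma T_0: "zp_trunc P d 0 = 0" unfolding zp_trunc_def by simp

lemma T_Suc: "zp_trunc P d (Suc n) = zp_trunc P d n + int (d n) * int P ^ n"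
  unfolding zp_trunc_def by simp

lemma cs_T: "cs (int P) (zp_trunc P d)"
  by (rule csI) (simp add: T_Suc)

lemma T_bound:
  assumes "d \<in> Zp P"
  shows "0 \<le> zp_trunc P d n \<and> zp_trunc P d n < int P ^ n"
proof (induction n)
  case 0 then show ?case by (simp add: T_0)
next
  case (Suc n)
  have dn: "int (d n) \<le> int P - 1" using assms unfolding Zp_def by force
  have "int (d n) * int P ^ n \<le> (int P - 1) * int P ^ n" using dn by (intro mult_right_mono) auto
  then show ?case using Suc by (simp add: T_Suc algebra_simps)
qed

lemma T_cong: "(\<And>i. i < N \<Longrightarrow> d i = d' i) \<Longrightarrow> zp_trunc P d N = zp_trunc P d' N"
  unfolding zp_trunc_def by (intro sum.cong) auto

definition digs :: "nat \<Rightarrow> (nat \<Rightarrow> int) \<Rightarrow> nat \<Rightarrow> nat" where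
  "digs P s i = nat ((s (Suc i) div int P ^ i) mod int P)"

lemma digs_Zp: "P > 1 \<Longrightarrow> digs P s \<in> Zp P"
  unfolding Zp_def digs_def by (auto simp: nat_less_iff)

lemma digs_T:
  assumes P: "P > 1" and s: "cs (int P) s"
  shows "zp_trunc P (digs P s) n = s n mod int P ^ n"
proof (induction n)
  case 0 then show ?case by (simp add: T_0)
next
  case (Suc n)
  have P0: "int P \<ge> 0" by simp
  have e: "s (Suc n) mod int P ^ n = s n mod int P ^ n"
    using csD[OF s, of n "Suc n"] by (simp add: mod_eq_dvd_iff)
  have "s (Suc n) mod int P ^ Suc n = s (Suc n) mod (int P ^ n * int P)" by (simp add: mult.commute)
  also have "\<dots> = int P ^ n * (s (Suc n) div int P ^ n mod int P) + s (Suc n) mod int P ^ n"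
    by (rule zmod_zmult2_eq[OF P0])
  finally have "s (Suc n) mod int P ^ Suc n = int P ^ n * (s (Suc n) div int P ^ n mod int P) + s n mod int P ^ n"
    unfolding e .
  moreover have "int (digs P s n) = s (Suc n) div int P ^ n mod int P"
    unfolding digs_def using P by simp
  ultimately show ?case unfolding T_Suc Suc by (simp add: algebra_simps)
qed

lemma T_digit:
  assumes P: "P > 1" and d: "d \<in> Zp P" and i: "i < N"
  shows "int (d i) = (zp_trunc P d N div int P ^ i) mod int P"
  using i
proof (induction N)
  case 0 then show ?case by simp
next
  case (Suc N)
  have P0: "int P > 0" using P by simp
  show ?case
  proof (cases "i = N")
    case True
    have b: "0 \<le> zp_trunc P d i" "zp_trunc P d i < int P ^ i" using T_bound[OF d] by auto
    have "zp_trunc P d (Suc i) div int P ^ i = int (d i) + zp_trunc P d i div int P ^ i"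
      unfolding T_Suc using P0 by simp
    also have "zp_trunc P d i div int P ^ i = 0" using b by simp
    finally show ?thesis using True d unfolding Zp_def by simp
  next
    case False
    then have iN: "i < N" using Suc by simp
    obtain k where k: "N = i + Suc k" using less_imp_Suc_add[OF iN] by auto
    have "int (d N) * int P ^ N = (int (d N) * int P ^ Suc k) * int P ^ i"
      unfolding k by (simp add: power_add algebra_simps)
    then have "zp_trunc P d (Suc N) = zp_trunc P d N + (int (d N) * int P ^ Suc k) * int P ^ i"
      unfolding T_Suc by simp
    then have "zp_trunc P d (Suc N) div int P ^ i = int (d N) * int P ^ Suc k + zp_trunc P d N div int P ^ i"
      using div_mult_self1[of "int P ^ i" "zp_trunc P d N" "int (d N) * int P ^ Suc k"] P0 by simp
    then have "(zp_trunc P d (Suc N) div int P ^ i) mod int P = (zp_trunc P d N div int P ^ i) mod int P"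
      by (simp add: mod_add_left_eq[symmetric])
    then show ?thesis using Suc.IH[OF iN] by simp
  qed
qed

lemma one_Zp: "P > 1 \<Longrightarrow> (\<lambda>i. if i = 0 then 1 else 0) \<in> Zp P"
  unfolding Zp_def by auto

lemma T_one: "zp_trunc P (\<lambda>i. if i = 0 then 1 else 0) n = (if n = 0 then 0 else 1)"
  by (induction n) (auto simp: T_0 T_Suc)

definition hom :: "fam \<Rightarrow> nat \<Rightarrow> int \<Rightarrow> int \<Rightarrow> int \<Rightarrow> int \<Rightarrow> int" where
  "hom f n x0 x1 y0 y1 = (\<Sum>i\<le>2. \<Sum>j\<le>2. f i j n * x0^i * x1^(2-i) * y0^j * y1^(2-j))"

lemma bihom_hom:
  "bihom_eval P A X0 X1 Y0 Y1 n = hom (\<lambda>i j. zp_trunc P (A (2-i) (2-j))) n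
      (zp_trunc P X0 n) (zp_trunc P X1 n) (zp_trunc P Y0 n) (zp_trunc P Y1 n)"
  unfolding bihom_eval_def hom_def by (simp add: numeral_2_eq_2 algebra_simps)

lemma hom_ev: "hom f n x 1 y 1 = ev f n x y"
  unfolding hom_def ev_def by simp

lemma inv_seq:
  fixes p :: int
  assumes p: "prime p" and u: "cs p u" and nu: "\<not> p dvd u 1"
  shows "\<exists>v. cs p v \<and> (\<forall>n. p^n dvd u n * v n - 1)"
proof -
  have ex: "\<exists>v. p^n dvd u n * v - 1" for n
  proof (cases n)
    case 0 then show ?thesis by simp
  next
    case (Suc k)
    have "p dvd u n - u 1" using csD[OF u, of 1 n] Suc by simp
    then have "\<not> p dvd u n" using nu dvd_iff_diff by blast
    then have "coprime p (u n)" using p prime_imp_coprime by blast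
    then have "coprime (u n) (p^n)" by (simp add: coprime_commute)
    then have g: "gcd (u n) (p^n) = 1" by (simp add: coprime_iff_gcd_eq_1)
    have "fst (bezout_coefficients (u n) (p^n)) * u n + snd (bezout_coefficients (u n) (p^n)) * p^n = gcd (u n) (p^n)"
      by (rule bezout_coefficients_fst_snd)
    then have "u n * fst (bezout_coefficients (u n) (p^n)) - 1 = p^n * (- snd (bezout_coefficients (u n) (p^n)))"
      using g by (simp add: algebra_simps)
    then have "p^n dvd u n * fst (bezout_coefficients (u n) (p^n)) - 1" by (rule dvdI)
    then show ?thesis by blast
  qed
  define v where "v n = (SOME v. p^n dvd u n * v - 1)" for n
  have v: "p^n dvd u n * v n - 1" for n unfolding v_def by (rule someI_ex[OF ex])
  have "cs p v"
  proof (rule csI)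
    fix n
    have a: "p^n dvd u (Suc n) * v (Suc n) - 1"
      using v[of "Suc n"] dvd_trans[of "p^n" "p^Suc n"] by (simp add: le_imp_power_dvd)
    have b: "p^n dvd u (Suc n) - u n" using csD[OF u, of n "Suc n"] by simp
    have "p^n dvd (u (Suc n) * v (Suc n) - 1) - v (Suc n) * (u (Suc n) - u n)"
      using a b by simp
    then have c: "p^n dvd u n * v (Suc n) - 1" by (simp add: algebra_simps)
    have "v (Suc n) - v n = v (Suc n) * (1 - u n * v n) + v n * (u n * v (Suc n) - 1)"
      by (simp add: algebra_simps)
    moreover have "p^n dvd v (Suc n) * (1 - u n * v n) + v n * (u n * v (Suc n) - 1)"
      using v[of n] c by (simp add: dvd_diff_commute)
    ultimately show "p^n dvd v (Suc n) - v n" by simp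
  qed
  then show ?thesis using v by blast
qed



lemma hpz_Zf:
  assumes P: "prime P"
  shows "has_primitive_zero P A \<longleftrightarrow> Zf (int P) (\<lambda>i j. zp_trunc P (A (2-i) (2-j)))"
    (is "_ \<longleftrightarrow> Zf ?p ?F")
proof
  have P1: "P > 1" using P prime_gt_1_nat by blast
  have p: "prime ?p" using P by simp
  assume "has_primitive_zero P A"
  then obtain X0 X1 Y0 Y1 where X1: "X1 \<in> Zp P" and Y1: "Y1 \<in> Zp P"
    and nd: "\<not> ?p dvd zp_trunc P X1 1 * zp_trunc P Y1 1"
    and z: "\<And>n. ?p^n dvd bihom_eval P A X0 X1 Y0 Y1 n"
    unfolding has_primitive_zero_def by blast
  have n1: "\<not> ?p dvd zp_trunc P X1 1" and n2: "\<not> ?p dvd zp_trunc P Y1 1" using nd by auto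
  obtain iv where iv: "cs ?p iv" "\<And>n. ?p^n dvd zp_trunc P X1 n * iv n - 1" using inv_seq[OF p cs_T n1] by blast
  obtain jv where jv: "cs ?p jv" "\<And>n. ?p^n dvd zp_trunc P Y1 n * jv n - 1" using inv_seq[OF p cs_T n2] by blast
  define x where "x n = zp_trunc P X0 n * iv n" for n
  define y where "y n = zp_trunc P Y0 n * jv n" for n
  have csx: "cs ?p x" unfolding x_def by (rule cs_mul[OF cs_T iv(1)])
  have csy: "cs ?p y" unfolding y_def by (rule cs_mul[OF cs_T jv(1)])
  have "?p^n dvd ev ?F n (x n) (y n)" for n
  proof (cases n)
    case 0 then show ?thesis by simp
  next
    case (Suc k)
    define a where "a = zp_trunc P X1 n"
    define b where "b = zp_trunc P Y1 n"
    define X where "X = zp_trunc P X0 n"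
    define Y where "Y = zp_trunc P Y0 n"
    have ai: "?p^n dvd a * iv n - 1" unfolding a_def by (rule iv(2))
    have bj: "?p^n dvd b * jv n - 1" unfolding b_def by (rule jv(2))
    have trm: "?p^n dvd ?F i j n * X^i * a^(2-i) * Y^j * b^(2-j) - a^2 * b^2 * (?F i j n * (X * iv n)^i * (Y * jv n)^j)"
      if ij: "i \<le> 2" "j \<le> 2" for i j
    proof -
      have a2: "a^2 = a^(2-i) * a^i" using ij by (simp add: power_add[symmetric])
      have b2: "b^2 = b^(2-j) * b^j" using ij by (simp add: power_add[symmetric])
      have e: "?F i j n * X^i * a^(2-i) * Y^j * b^(2-j) - a^2 * b^2 * (?F i j n * (X * iv n)^i * (Y * jv n)^j)
          = (?F i j n * X^i * a^(2-i) * Y^j * b^(2-j)) * (1 - (a * iv n)^i * (b * jv n)^j)"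
        unfolding a2 b2 by (simp add: power_mult_distrib algebra_simps)
      have "?p^n dvd (a * iv n)^i * (b * jv n)^j - 1^i * 1^j"
        by (intro dvd_diff_mult dvd_diff_pow ai bj)
      then have "?p^n dvd 1 - (a * iv n)^i * (b * jv n)^j" by (simp add: dvd_diff_commute)
      then show ?thesis unfolding e by simp
    qed
    have "hom ?F n X a Y b - a^2 * b^2 * ev ?F n (X * iv n) (Y * jv n)
        = (\<Sum>i\<le>2. \<Sum>j\<le>2. ?F i j n * X^i * a^(2-i) * Y^j * b^(2-j) - a^2 * b^2 * (?F i j n * (X * iv n)^i * (Y * jv n)^j))"
      unfolding hom_def ev_def by (simp add: sum_subtractf sum_distrib_left)
    also have "?p^n dvd \<dots>" by (intro dvd_sum trm) auto
    finally have d1: "?p^n dvd hom ?F n X a Y b - a^2 * b^2 * ev ?F n (X * iv n) (Y * jv n)" .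
    have "?p^n dvd hom ?F n X a Y b" using z[of n] unfolding bihom_hom X_def a_def Y_def b_def .
    then have d2: "?p^n dvd ev ?F n (X * iv n) (Y * jv n) * (a^2 * b^2)"
      using dvd_iff_diff[OF d1] by (simp add: mult.commute)
    have "?p dvd a - zp_trunc P X1 1" unfolding a_def using csD[OF cs_T, of 1 n] Suc by simp
    then have na: "\<not> ?p dvd a" using n1 dvd_iff_diff by blast
    have "?p dvd b - zp_trunc P Y1 1" unfolding b_def using csD[OF cs_T, of 1 n] Suc by simp
    then have nb: "\<not> ?p dvd b" using n2 dvd_iff_diff by blast
    have "\<not> ?p dvd a^2 * b^2" using na nb p by (simp add: prime_dvd_mult_iff prime_dvd_power_iff)
    then have "coprime ?p (a^2 * b^2)" using p prime_imp_coprime by blast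
    then have "coprime (?p^n) (a^2 * b^2)" by simp
    then have "?p^n dvd ev ?F n (X * iv n) (Y * jv n)" using d2 coprime_dvd_mult_left_iff by blast
    then show ?thesis unfolding x_def y_def X_def Y_def .
  qed
  then show "Zf ?p ?F" unfolding Zf_def using csx csy by blast
next
  have P1: "P > 1" using P prime_gt_1_nat by blast
  assume "Zf ?p ?F"
  then obtain x y where x: "cs ?p x" and y: "cs ?p y" and z: "\<And>n. ?p^n dvd ev ?F n (x n) (y n)"
    unfolding Zf_def by blast
  define one :: "nat \<Rightarrow> nat" where "one i = (if i = 0 then 1 else 0)" for i
  have "?p^n dvd bihom_eval P A (digs P x) one (digs P y) one n" for n
  proof (cases n)
    case 0 then show ?thesis by simp
  next
    case (Suc k)
    have "bihom_eval P A (digs P x) one (digs P y) one n = ev ?F n (x n mod ?p^n) (y n mod ?p^n)"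
      unfolding bihom_hom one_def T_one digs_T[OF P1 x] digs_T[OF P1 y] using Suc by (simp add: hom_ev)
    moreover have "?p^n dvd ev ?F n (x n mod ?p^n) (y n mod ?p^n) - ev ?F n (x n) (y n)"
      by (intro ev_diff_dvd) (simp_all add: dvd_diff_commute dvd_mod_diff)
    ultimately show ?thesis using z[of n] dvd_iff_diff by metis
  qed
  moreover have "\<not> ?p dvd zp_trunc P one 1 * zp_trunc P one 1" unfolding one_def T_one using P1 by simp
  ultimately show "has_primitive_zero P A"
    unfolding has_primitive_zero_def using digs_Zp[OF P1] one_Zp[OF P1] unfolding one_def by blast
qed



lemma zv_ge:
  assumes "enat k \<le> zp_val d" "i < k"
  shows "d i = 0"
proof (cases "\<forall>i. d i = 0")
  case True then show ?thesis by simp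
next
  case False
  have z: "zp_val d = enat (LEAST i. d i \<noteq> 0)" unfolding zp_val_def by (rule if_not_P[OF False])
  have "k \<le> (LEAST i. d i \<noteq> 0)" using assms(1) unfolding z by simp
  then have "i < (LEAST i. d i \<noteq> 0)" using assms(2) by simp
  then show ?thesis using not_less_Least by blast
qed

lemma zv_eq:
  assumes "zp_val d = enat k"
  shows "d k \<noteq> 0" "\<And>i. i < k \<Longrightarrow> d i = 0"
proof -
  have ex: "\<not> (\<forall>i. d i = 0)"
  proof
    assume "\<forall>i. d i = 0"
    then have "zp_val d = \<infinity>" unfolding zp_val_def by simp
    then show False using assms by simp
  qed
  have z: "zp_val d = enat (LEAST i. d i \<noteq> 0)" unfolding zp_val_def by (rule if_not_P[OF ex])
  have k: "(LEAST i. d i \<noteq> 0) = k" using assms unfolding z by simp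
  show "d k \<noteq> 0" using LeastI_ex[of "\<lambda>i. d i \<noteq> 0"] ex k by auto
  show "d i = 0" if "i < k" for i using not_less_Least[of i "\<lambda>i. d i \<noteq> 0"] that k by auto
qed

lemma T_1: "zp_trunc P d 1 = int (d 0)"
  using T_Suc[of P d 0] by (simp add: T_0)

lemma T_1s: "zp_trunc P d (Suc 0) = int (d 0)"
  using T_1 by simp

lemma T_2: "zp_trunc P d 2 = int (d 0) + int (d 1) * int P"
  using T_Suc[of P d 1] T_1[of P d] by (simp add: numeral_2_eq_2)

definition fixA :: "nat \<Rightarrow> (nat \<Rightarrow> nat) \<Rightarrow> (nat \<Rightarrow> nat) \<Rightarrow> (nat \<Rightarrow> nat) \<Rightarrow> (nat \<Rightarrow> nat) \<Rightarrow> (nat \<Rightarrow> nat) \<Rightarrow> (nat \<Rightarrow> nat) \<Rightarrow> fam" where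
  "fixA P a00 a01 a02 a10 a11 a20 i j = zp_trunc P (coef22 a00 a01 a02 a10 a11 (\<lambda>_. 0) a20 (\<lambda>_. 0) (\<lambda>_. 0) (2-i) (2-j))"

lemma fixA_simps:
  "fixA P a00 a01 a02 a10 a11 a20 2 2 = zp_trunc P a00"
  "fixA P a00 a01 a02 a10 a11 a20 2 1 = zp_trunc P a01"
  "fixA P a00 a01 a02 a10 a11 a20 2 0 = zp_trunc P a02"
  "fixA P a00 a01 a02 a10 a11 a20 1 2 = zp_trunc P a10"
  "fixA P a00 a01 a02 a10 a11 a20 1 1 = zp_trunc P a11"
  "fixA P a00 a01 a02 a10 a11 a20 0 2 = zp_trunc P a20"
  unfolding fixA_def coef22_def by simp_all

lemma Adm_fixA:
  assumes P: "P > 1"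
    and v: "zp_val a00 \<ge> 2" "zp_val a01 \<ge> 2" "zp_val a02 = 1"
      "zp_val a10 \<ge> 1" "zp_val a11 \<ge> 1" "zp_val a20 = 0"
    and Z: "a02 \<in> Zp P" "a20 \<in> Zp P"
  shows "Adm (int P) (fixA P a00 a01 a02 a10 a11 a20)"
proof -
  have e2: "(2::enat) = enat 2" by (simp add: numeral_eq_enat)
  have a00: "a00 0 = 0" "a00 (Suc 0) = 0" using zv_ge[of 2 a00] v(1) unfolding e2 by auto
  have a01: "a01 0 = 0" "a01 (Suc 0) = 0" using zv_ge[of 2 a01] v(2) unfolding e2 by auto
  have a02: "a02 0 = 0" "a02 (Suc 0) \<noteq> 0" using zv_eq[of a02 1] v(3) by (auto simp: one_enat_def)
  have a10: "a10 0 = 0" using zv_ge[of 1 a10] v(4) by (auto simp: one_enat_def)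
  have a11: "a11 0 = 0" using zv_ge[of 1 a11] v(5) by (auto simp: one_enat_def)
  have a20: "a20 0 \<noteq> 0" using zv_eq[of a20 0] v(6) by (auto simp: zero_enat_def)
  have b02: "a02 (Suc 0) < P" and b20: "a20 0 < P" using Z unfolding Zp_def by auto
  have n1: "\<not> int P^2 dvd int (a02 (Suc 0)) * int P"
  proof
    assume "int P^2 dvd int (a02 (Suc 0)) * int P"
    then have "int P * int P dvd int (a02 (Suc 0)) * int P" by (simp add: power2_eq_square)
    then have "int P dvd int (a02 (Suc 0))" using P by simp
    then have "P dvd a02 (Suc 0)" by simp
    then show False using a02(2) b02 by (simp add: nat_dvd_not_less)
  qed
  have n2: "\<not> int P dvd int (a20 0)"
  proof
    assume "int P dvd int (a20 0)"
    then have "P dvd a20 0" by simp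
    then show False using a20 b20 by (simp add: nat_dvd_not_less)
  qed
  show ?thesis unfolding Adm_def fixA_simps
    using cs_T n1 n2 by (simp add: T_1s T_2 a00 a01 a02 a10 a11)
qed

lemma T_multp: "zp_trunc P (zp_mult_p c) (Suc n) = int P * zp_trunc P c n"
proof (induction n)
  case 0 then show ?case by (simp add: T_Suc T_0 zp_mult_p_def)
next
  case (Suc n)
  show ?case unfolding T_Suc[of P "zp_mult_p c" "Suc n"] Suc T_Suc[of P c n]
    by (simp add: zp_mult_p_def algebra_simps)
qed

lemma fam_stmt_cong:
  assumes "i \<le> 2" "j \<le> 2"
  shows "int P^n dvd zp_trunc P (coef22 a00 a01 a02 a10 a11 (zp_mult_p c) a20 b e (2-i) (2-j)) n
     - mkfam (int P) (fixA P a00 a01 a02 a10 a11 a20) (zp_trunc P c) (zp_trunc P b) (zp_trunc P e) i j n"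
proof -
  have m: "int P^n dvd zp_trunc P (zp_mult_p c) n - int P * zp_trunc P c n"
  proof (cases n)
    case 0 then show ?thesis by simp
  next
    case (Suc k)
    have "zp_trunc P (zp_mult_p c) n - int P * zp_trunc P c n = - (int (c k) * int P ^ n)"
      unfolding Suc T_multp T_Suc[of P c k] by (simp add: algebra_simps)
    then show ?thesis by simp
  qed
  show ?thesis
    by (rule all9[where P = "\<lambda>i j. int P^n dvd zp_trunc P (coef22 a00 a01 a02 a10 a11 (zp_mult_p c) a20 b e (2-i) (2-j)) n
     - mkfam (int P) (fixA P a00 a01 a02 a10 a11 a20) (zp_trunc P c) (zp_trunc P b) (zp_trunc P e) i j n", OF _ _ _ _ _ _ _ _ _ assms])
       (simp_all add: mkfam_simps fixA_def coef22_def m)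
qed



lemma space_zp_haar: "space (zp_haar P) = Zp P"
  unfolding zp_haar_def space_PiM space_uniform_count_measure Zp_def PiE_UNIV_domain Pi_def by auto

lemma prob_zp_haar: "P > 0 \<Longrightarrow> prob_space (zp_haar P)"
  unfolding zp_haar_def by (intro prob_space_PiM prob_space_uniform_count_measure) auto

lemma box_eq:
  assumes P: "P > 1" and s: "0 \<le> s" "s < int P ^ N"
  shows "{d \<in> space (zp_haar P). zp_trunc P d N = s} =
     prod_emb UNIV (\<lambda>_. uniform_count_measure {0..<P}) {..<N} (\<Pi>\<^sub>E i\<in>{..<N}. {digs P (\<lambda>_. s) i})"
proof -
  define g where "g = digs P (\<lambda>_. s)"
  have csc: "cs (int P) (\<lambda>_. s)" by (rule cs_const)
  have gZ: "g \<in> Zp P" unfolding g_def by (rule digs_Zp[OF P])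
  have Tg: "zp_trunc P g N = s" unfolding g_def digs_T[OF P csc] using s by simp
  have iff: "zp_trunc P d N = s \<longleftrightarrow> (\<forall>i<N. d i = g i)" if d: "d \<in> Zp P" for d
  proof
    assume h: "zp_trunc P d N = s"
    show "\<forall>i<N. d i = g i"
    proof (intro allI impI)
      fix i assume i: "i < N"
      have "int (d i) = (s div int P ^ i) mod int P" using T_digit[OF P d i] h by simp
      moreover have "int (g i) = (s div int P ^ i) mod int P" using T_digit[OF P gZ i] Tg by simp
      ultimately show "d i = g i" by simp
    qed
  next
    assume "\<forall>i<N. d i = g i"
    then have "zp_trunc P d N = zp_trunc P g N" by (intro T_cong) auto
    then show "zp_trunc P d N = s" using Tg by simp
  qed
  have mem: "d \<in> prod_emb UNIV (\<lambda>_. uniform_count_measure {0..<P}) {..<N} (\<Pi>\<^sub>E i\<in>{..<N}. {g i}) \<longleftrightarrow>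
      d \<in> Zp P \<and> (\<forall>i<N. d i = g i)" for d
    unfolding prod_emb_def space_uniform_count_measure Zp_def PiE_UNIV_domain
    by (auto simp: PiE_iff Pi_def)
  show ?thesis unfolding g_def[symmetric] using mem iff by (auto simp: space_zp_haar)
qed

lemma box_meas:
  assumes P: "P > 1" and s: "0 \<le> s" "s < int P ^ N"
  shows "{d \<in> space (zp_haar P). zp_trunc P d N = s} \<in> sets (zp_haar P)"
    and "emeasure (zp_haar P) {d \<in> space (zp_haar P). zp_trunc P d N = s} = ennreal (1 / real P ^ N)"
proof -
  define g where "g = digs P (\<lambda>_. s)"
  have gZ: "g \<in> Zp P" unfolding g_def by (rule digs_Zp[OF P])
  have gi: "{g i} \<in> sets (uniform_count_measure {0..<P})" for i
    using gZ unfolding sets_uniform_count_measure Zp_def by auto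
  show "{d \<in> space (zp_haar P). zp_trunc P d N = s} \<in> sets (zp_haar P)"
    unfolding box_eq[OF P s] unfolding zp_haar_def g_def[symmetric]
    by (rule sets_PiM_I) (use gi in auto)
  have "emeasure (zp_haar P) {d \<in> space (zp_haar P). zp_trunc P d N = s} = (\<Prod>i\<in>{..<N}. emeasure (uniform_count_measure {0..<P}) {g i})"
    unfolding box_eq[OF P s] unfolding zp_haar_def g_def[symmetric]
    by (rule emeasure_PiM_emb) (use P gi in \<open>auto intro: prob_space_uniform_count_measure\<close>)
  also have "\<dots> = (\<Prod>i\<in>{..<N}. ennreal (1 / real P))"
  proof (intro prod.cong refl)
    fix i
    have "g i \<in> {0..<P}" using gZ unfolding Zp_def by auto
    then show "emeasure (uniform_count_measure {0..<P}) {g i} = ennreal (1 / real P)"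
      using emeasure_uniform_count_measure[of "{0..<P}" "{g i}"] by simp
  qed
  also have "\<dots> = ennreal (1 / real P ^ N)" by (simp add: ennreal_power power_one_over)
  finally show "emeasure (zp_haar P) {d \<in> space (zp_haar P). zp_trunc P d N = s} = ennreal (1 / real P ^ N)" .
qed



lemma CYL:
  fixes P N :: nat and Phi :: "int \<Rightarrow> int \<Rightarrow> int \<Rightarrow> bool"
  assumes P: "P > 1"
  defines "MM \<equiv> zp_haar P \<Otimes>\<^sub>M (zp_haar P \<Otimes>\<^sub>M zp_haar P)"
  defines "S \<equiv> {\<omega> \<in> space MM. Phi (zp_trunc P (fst \<omega>) N) (zp_trunc P (fst (snd \<omega>)) N) (zp_trunc P (snd (snd \<omega>)) N)}"
  shows "S \<in> sets MM"
    and "measure MM S = (\<Sum>s\<in>{0..<int P ^ N}. \<Sum>t\<in>{0..<int P ^ N}. \<Sum>w\<in>{0..<int P ^ N}. of_bool (Phi s t w)) / real P ^ (3*N)"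
proof -
  let ?H = "zp_haar P"
  have P0: "P > 0" using P by simp
  interpret HP: prob_space ?H by (rule prob_zp_haar[OF P0])
  interpret HH: prob_space "?H \<Otimes>\<^sub>M ?H" by (intro prob_space_pair prob_zp_haar P0)
  interpret MP: prob_space MM unfolding MM_def by (intro prob_space_pair prob_zp_haar P0)
  define box where "box s = {d \<in> space ?H. zp_trunc P d N = s}" for s
  define R where "R = {0..<int P ^ N}"
  define c where "c = 1 / real P ^ N"
  have c0: "c \<ge> 0" unfolding c_def by simp
  have bs: "box s \<in> sets ?H" if "s \<in> R" for s using box_meas(1)[OF P, of s N] that unfolding box_def R_def by auto
  have be: "emeasure ?H (box s) = ennreal c" if "s \<in> R" for s using box_meas(2)[OF P, of s N] that unfolding box_def R_def c_def by auto
  define A where "A z = (if Phi (fst z) (fst (snd z)) (snd (snd z)) then box (fst z) \<times> (box (fst (snd z)) \<times> box (snd (snd z))) else {})" for z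
  have As: "A z \<in> sets MM" if "z \<in> R \<times> (R \<times> R)" for z
    using that bs unfolding A_def MM_def by (auto intro!: pair_measureI)
  have Am: "measure MM (A z) = of_bool (Phi (fst z) (fst (snd z)) (snd (snd z))) * c^3" if z: "z \<in> R \<times> (R \<times> R)" for z
  proof (cases "Phi (fst z) (fst (snd z)) (snd (snd z))")
    case False then show ?thesis unfolding A_def by simp
  next
    case True
    have "emeasure MM (A z) = emeasure ?H (box (fst z)) * emeasure (?H \<Otimes>\<^sub>M ?H) (box (fst (snd z)) \<times> box (snd (snd z)))"
    proof -
      have Az: "A z = box (fst z) \<times> (box (fst (snd z)) \<times> box (snd (snd z)))" using True unfolding A_def by simp
      have b1: "box (fst z) \<in> sets ?H" and b23: "box (fst (snd z)) \<times> box (snd (snd z)) \<in> sets (?H \<Otimes>\<^sub>M ?H)"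
        using z bs by (auto intro: pair_measureI)
      show ?thesis unfolding Az MM_def by (rule HH.emeasure_pair_measure_Times[OF b1 b23])
    qed
    also have "\<dots> = ennreal c * (ennreal c * ennreal c)"
    proof -
      have zz: "fst z \<in> R" "fst (snd z) \<in> R" "snd (snd z) \<in> R" using z by auto
      have "emeasure (?H \<Otimes>\<^sub>M ?H) (box (fst (snd z)) \<times> box (snd (snd z))) = emeasure ?H (box (fst (snd z))) * emeasure ?H (box (snd (snd z)))"
        by (rule HP.emeasure_pair_measure_Times[OF bs[OF zz(2)] bs[OF zz(3)]])
      then show ?thesis using be[OF zz(1)] be[OF zz(2)] be[OF zz(3)] by simp
    qed
    also have "\<dots> = ennreal (c^3)" using c0 by (simp add: ennreal_mult[symmetric] power3_eq_cube)
    finally show ?thesis using True c0 unfolding measure_def by simp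
  qed
  have S_eq: "S = (\<Union>z\<in>R \<times> (R \<times> R). A z)"
  proof (rule subset_antisym; rule subsetI)
    fix x assume "x \<in> S"
    then obtain a b e where x: "x = (a, b, e)" "a \<in> Zp P" "b \<in> Zp P" "e \<in> Zp P"
      and ph: "Phi (zp_trunc P a N) (zp_trunc P b N) (zp_trunc P e N)"
      unfolding S_def MM_def space_pair_measure space_zp_haar by auto
    have "(zp_trunc P a N, zp_trunc P b N, zp_trunc P e N) \<in> R \<times> (R \<times> R)"
      using T_bound[OF x(2)] T_bound[OF x(3)] T_bound[OF x(4)] unfolding R_def by auto
    moreover have "x \<in> A (zp_trunc P a N, zp_trunc P b N, zp_trunc P e N)"
      unfolding A_def box_def using x ph by (simp add: space_zp_haar)
    ultimately show "x \<in> (\<Union>z\<in>R \<times> (R \<times> R). A z)" by blast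
  next
    fix x assume "x \<in> (\<Union>z\<in>R \<times> (R \<times> R). A z)"
    then obtain z where z: "z \<in> R \<times> (R \<times> R)" and x: "x \<in> A z" by blast
    show "x \<in> S"
      using x unfolding A_def box_def S_def MM_def space_pair_measure
      by (cases "Phi (fst z) (fst (snd z)) (snd (snd z))") auto
  qed
  have disj: "disjoint_family_on A (R \<times> (R \<times> R))"
    unfolding disjoint_family_on_def A_def box_def by auto
  show "S \<in> sets MM" unfolding S_eq using As by (intro sets.finite_UN) (auto simp: R_def)
  have "measure MM S = (\<Sum>z\<in>R \<times> (R \<times> R). measure MM (A z))"
    unfolding S_eq by (rule MP.finite_measure_finite_Union) (use As disj in \<open>auto simp: R_def\<close>)
  also have "\<dots> = (\<Sum>z\<in>R \<times> (R \<times> R). of_bool (Phi (fst z) (fst (snd z)) (snd (snd z)))) * c^3"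
    by (simp add: Am sum_distrib_right)
  also have "(\<Sum>z\<in>R \<times> (R \<times> R). of_bool (Phi (fst z) (fst (snd z)) (snd (snd z))) :: real)
      = (\<Sum>s\<in>R. \<Sum>t\<in>R. \<Sum>w\<in>R. of_bool (Phi s t w))"
    by (simp add: sum.cartesian_product split_def)
  also have "c^3 = 1 / real P ^ (3*N)" unfolding c_def by (simp add: power_mult power_one_over mult.commute)
  finally show "measure MM S = (\<Sum>s\<in>{0..<int P ^ N}. \<Sum>t\<in>{0..<int P ^ N}. \<Sum>w\<in>{0..<int P ^ N}. of_bool (Phi s t w)) / real P ^ (3*N)"
    unfolding R_def by simp
qed



theorem lemma4p1:
  fixes p :: nat and a00 a01 a02 a10 a11 a20 :: "nat \<Rightarrow> nat"
  assumes "prime p"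
    and "a00 \<in> Zp p" "a01 \<in> Zp p" "a02 \<in> Zp p" "a10 \<in> Zp p" "a11 \<in> Zp p" "a20 \<in> Zp p"
    and "zp_val a00 \<ge> 2" "zp_val a01 \<ge> 2" "zp_val a02 = 1"
    and "zp_val a10 \<ge> 1" "zp_val a11 \<ge> 1" "zp_val a20 = 0"
  defines "M \<equiv> zp_haar p \<Otimes>\<^sub>M (zp_haar p \<Otimes>\<^sub>M zp_haar p)"
  defines "E \<equiv> {(c, b, e) \<in> space M.
                  has_primitive_zero p (coef22 a00 a01 a02 a10 a11 (zp_mult_p c) a20 b e)}"
  shows "E \<in> sets M \<and> measure M E = 1 / 2"
proof -
  have P1: "p > 1" using assms(1) prime_gt_1_nat by blast
  have P0: "p > 0" using P1 by simp
  have pp: "prime (int p)" using assms(1) by simp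
  interpret MP: prob_space M unfolding M_def by (intro prob_space_pair prob_zp_haar P0)
  define fx where "fx = fixA p a00 a01 a02 a10 a11 a20"
  have Ad: "Adm (int p) fx" unfolding fx_def by (rule Adm_fixA[OF P1]) (use assms in auto)
  define U where "U m = {\<omega> \<in> space M. V (int p) m fx (zp_trunc p (fst \<omega>) m) (zp_trunc p (fst (snd \<omega>)) m) (zp_trunc p (snd (snd \<omega>)) m)}" for m
  have Us: "U m \<in> sets M" for m unfolding U_def M_def by (rule CYL(1)[OF P1])
  have Um: "measure M (U m) = 1/2 + 1/2 * (1 / real p) ^ m" for m
  proof -
    have "measure M (U m) = (\<Sum>s\<in>{0..<int p ^ m}. \<Sum>t\<in>{0..<int p ^ m}. \<Sum>w\<in>{0..<int p ^ m}. of_bool (V (int p) m fx s t w)) / real p ^ (3*m)"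
      unfolding U_def M_def by (rule CYL(2)[OF P1])
    also have "(\<Sum>s\<in>{0..<int p ^ m}. \<Sum>t\<in>{0..<int p ^ m}. \<Sum>w\<in>{0..<int p ^ m}. of_bool (V (int p) m fx s t w) :: real)
        = real_of_int (cnt (int p) m fx)"
      unfolding cnt_def by (simp add: of_int_sum)
    also have "real_of_int (cnt (int p) m fx) = (real p ^ (3*m) + real p ^ (2*m)) / 2"
    proof -
      have "2 * cnt (int p) m fx = int p ^ (3*m) + int p ^ (2*m)" by (rule cnt_formula[OF pp Ad])
      then have "real_of_int (2 * cnt (int p) m fx) = real_of_int (int p ^ (3*m) + int p ^ (2*m))" by simp
      then show ?thesis by simp
    qed
    also have "(real p ^ (3*m) + real p ^ (2*m)) / 2 / real p ^ (3*m) = 1/2 + 1/2 * (1 / real p) ^ m"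
    proof -
      have pm: "real p ^ m > 0" using P0 by simp
      have "real p ^ (3*m) = real p ^ m * real p ^ m * real p ^ m"
        unfolding mult.commute[of 3 m] power_mult by (simp add: power3_eq_cube)
      moreover have "real p ^ (2*m) = real p ^ m * real p ^ m"
        unfolding mult.commute[of 2 m] power_mult by (simp add: power2_eq_square)
      ultimately show ?thesis using pm by (simp add: field_simps power_one_over)
    qed
    finally show ?thesis .
  qed
  have dec: "decseq U"
  proof (rule decseq_SucI, rule subsetI)
    fix m \<omega> assume w: "\<omega> \<in> U (Suc m)"
    then show "\<omega> \<in> U m" unfolding U_def using Vmono[OF pp Ad cs_T cs_T cs_T] by blast
  qed
  have memE: "\<omega> \<in> E \<longleftrightarrow> (\<forall>m. \<omega> \<in> U m)" if w: "\<omega> \<in> space M" for \<omega>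
  proof -
    obtain c b e where we: "\<omega> = (c, b, e)" by (cases \<omega>) auto
    have "\<omega> \<in> E \<longleftrightarrow> has_primitive_zero p (coef22 a00 a01 a02 a10 a11 (zp_mult_p c) a20 b e)"
      unfolding E_def using w we by simp
    also have "\<dots> \<longleftrightarrow> Zf (int p) (\<lambda>i j. zp_trunc p (coef22 a00 a01 a02 a10 a11 (zp_mult_p c) a20 b e (2-i) (2-j)))"
      by (rule hpz_Zf[OF assms(1)])
    also have "\<dots> \<longleftrightarrow> Zf (int p) (mkfam (int p) fx (zp_trunc p c) (zp_trunc p b) (zp_trunc p e))"
      unfolding fx_def by (rule Zf_cong) (rule fam_stmt_cong)
    also have "\<dots> \<longleftrightarrow> (\<forall>m. V (int p) m fx (zp_trunc p c m) (zp_trunc p b m) (zp_trunc p e m))"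
      using ZV[OF pp Ad cs_T cs_T cs_T] VZ[OF pp Ad cs_T cs_T cs_T] by blast
    also have "\<dots> \<longleftrightarrow> (\<forall>m. \<omega> \<in> U m)" unfolding U_def using w we by simp
    finally show ?thesis .
  qed
  have EU: "E = (\<Inter>m. U m)"
  proof (rule set_eqI)
    fix \<omega>
    show "\<omega> \<in> E \<longleftrightarrow> \<omega> \<in> (\<Inter>m. U m)"
    proof (cases "\<omega> \<in> space M")
      case True then show ?thesis using memE by simp
    next
      case False
      then have "\<omega> \<notin> E" unfolding E_def by auto
      moreover have "\<omega> \<notin> U 0" using False unfolding U_def by simp
      ultimately show ?thesis by blast
    qed
  qed
  have Es: "E \<in> sets M" unfolding EU using Us by (intro sets.countable_INT) auto
  have lim1: "(\<lambda>m. measure M (U m)) \<longlonglongrightarrow> measure M E"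
    unfolding EU by (rule MP.finite_Lim_measure_decseq) (use Us dec in auto)
  have lim2: "(\<lambda>m. measure M (U m)) \<longlonglongrightarrow> 1/2"
  proof -
    have n1: "norm (1 / real p) < 1" using P1 by simp
    have "(\<lambda>m. (1 / real p) ^ m) \<longlonglongrightarrow> 0" by (rule LIMSEQ_power_zero[OF n1])
    then have "(\<lambda>m. 1/2 + 1/2 * (1 / real p) ^ m) \<longlonglongrightarrow> 1/2 + 1/2 * 0"
      by (rule tendsto_add[OF tendsto_const tendsto_mult[OF tendsto_const]])
    then show ?thesis unfolding Um by simp
  qed
  have "measure M E = 1/2" using LIMSEQ_unique[OF lim1 lim2] .
  then show ?thesis using Es by simp
qed



end
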